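(* Let $H$ be a real Hilbert space, $A:H\to c_0$ bounded linear with adjoint $A^*:\ell^1\to H$ (identifying $c_0^*=\ell^1$). Let $(H_n)_{n\in\mathbb N}$ be subspaces of $H$ with $\dim H_n=n$ such that the orthogonal projections $P_n$ onto $H_n$ satisfy $P_nv\to v$ for all $v\in H$, and assume $\mathcal N(A)\cap H_n=\{0\}$ for all $n$. Let $f\in H$ be such that $A^*u=f$ has a solution in $\ell^1$, and assume $$\forall z\in H:\quad \inf_{z^n\in H_n}\|A(z-z^n)\|_\infty\to0\ \text{ as } n\to\infty.$$ Then: (a) If for each $n$, $u^{\dagger,n}$ is a solution of $\min\{\|u\|_1: u\in\ell^1,\ \langle z,A^*u\rangle=\langle z,f\rangle\ \forall z\in H_n\}$, then $(u^{\dagger,n})_n$ has a subsequence converging in the $\ell^1$-norm to a solution of $A^*u=f$. (b) Let $n_{AP}:(0,\infty)\to\mathbb N$ satisfy $n_{AP}(\delta)\to\infty$ and $\delta\kappa_{n_{AP}(\delta)}\to0$ as $\delta\to0$. Let $(\delta_m)_m\subset(0,\infty)$ converge to $0$, let $f^{\delta_m}\in H$ with $\|f^{\delta_m}-f\|\le\delta_m$, and let $u^m$ be a solution of $\min\{\|u\|_1: u\in\ell^1,\ \langle z,A^*u\rangle=\langle z,f^{\delta_m}\rangle\ \forall z\in H_{n_{AP}(\delta_m)}\}$. Then there is a subsequence $(u^{l})_l$ of $(u^m)_m$ and a solution $u^\dagger$ of $A^*u=f$ with $\|u^l-u^\dagger\|_1\to0$.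
   Context: $A^*$ is defined by $\langle A^*u,z\rangle=\sum_iu_i(Az)_i$. $\kappa_n=\sup_{z\in H_n\setminus\{0\}}\|z\|/\|Az\|_\infty$. *)

theory Defs
  imports "HOL-Analysis.Analysis"
begin

definition ell1 :: "(nat \<Rightarrow> real) set" where
  "ell1 = {u. summable (\<lambda>i. \<bar>u i\<bar>)}"

definition l1norm :: "(nat \<Rightarrow> real) \<Rightarrow> real" where
  "l1norm u = (\<Sum>i. \<bar>u i\<bar>)"

definition c0 :: "(nat \<Rightarrow> real) set" where
  "c0 = {x. x \<longlonglongrightarrow> 0}"

definition supnorm :: "(nat \<Rightarrow> real) \<Rightarrow> real" where
  "supnorm x = (SUP i. \<bar>x i\<bar>)"

definition bounded_linear_c0 :: "('h::real_normed_vector \<Rightarrow> nat \<Rightarrow> real) \<Rightarrow> bool" where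
  "bounded_linear_c0 A \<longleftrightarrow>
     (\<forall>x y i. A (x + y) i = A x i + A y i) \<and> (\<forall>c x i. A (scaleR c x) i = c * A x i) \<and> (\<forall>z. A z \<in> c0) \<and>
     (\<exists>C. \<forall>z. supnorm (A z) \<le> C * norm z)"

definition adj :: "('h::real_inner \<Rightarrow> nat \<Rightarrow> real) \<Rightarrow> (nat \<Rightarrow> real) \<Rightarrow> 'h" where
  "adj A u = (THE w. \<forall>z. inner w z = (\<Sum>i. u i * A z i))"

definition orth_proj :: "'h::real_inner set \<Rightarrow> 'h \<Rightarrow> 'h" where
  "orth_proj S v = (THE p. p \<in> S \<and> (\<forall>z\<in>S. inner (v - p) z = 0))"

definition kappa :: "('h::real_normed_vector \<Rightarrow> nat \<Rightarrow> real) \<Rightarrow> 'h set \<Rightarrow> real" where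
  "kappa A S = (SUP z\<in>S - {0}. norm z / supnorm (A z))"

definition min_l1_sol ::
  "('h::real_inner \<Rightarrow> nat \<Rightarrow> real) \<Rightarrow> 'h set \<Rightarrow> 'h \<Rightarrow> (nat \<Rightarrow> real) \<Rightarrow> bool" where
  "min_l1_sol A S g u \<longleftrightarrow>
     u \<in> ell1 \<and> (\<forall>z\<in>S. inner z (adj A u) = inner z g) \<and>
     (\<forall>v\<in>ell1. (\<forall>z\<in>S. inner z (adj A v) = inner z g) \<longrightarrow> l1norm u \<le> l1norm v)"

end

theory Submission
  imports Defs "HOL-Library.Diagonal_Subsequence"
begin


lemma parallelogram_mid:
  fixes a x y :: "'a::real_inner"
  shows "norm (x - y)^2 = 2 * norm (a - x)^2 + 2 * norm (a - y)^2 - 4 * norm (a - (1/2) *\<^sub>R (x + y))^2"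
proof -
  have h: "(1/2::real) *\<^sub>R a + (1/2) *\<^sub>R a = a" by (simp flip: scaleR_add_left)
  have e: "a - (1/2) *\<^sub>R (x + y) = (1/2) *\<^sub>R ((a - x) + (a - y))" by (simp add: algebra_simps h)
  show ?thesis unfolding e power2_norm_eq_inner
    by (simp add: inner_diff_left inner_diff_right inner_add_left inner_add_right inner_commute algebra_simps)
qed

lemma closest_point_complete:
  fixes C :: "'a::{real_inner,complete_space} set"
  assumes cl: "closed C" and cv: "convex C" and ne: "C \<noteq> {}"
  shows "\<exists>p\<in>C. \<forall>x\<in>C. norm (a - p) \<le> norm (a - x)"
proof -
  define d where "d = infdist a C"
  have d0: "d \<ge> 0" unfolding d_def by (rule infdist_nonneg)
  have dle: "\<And>x. x \<in> C \<Longrightarrow> d \<le> norm (a - x)"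
    unfolding d_def by (metis dist_norm infdist_le)
  have "\<forall>k::nat. \<exists>x\<in>C. norm (a - x)^2 < d^2 + 1/(Suc k)"
  proof
    fix k :: nat
    define e where "e = sqrt (d^2 + 1/Suc k) - d"
    have "sqrt (d^2) < sqrt (d^2 + 1/Suc k)" by (intro real_sqrt_less_mono) simp
    hence e0: "e > 0" using d0 by (simp add: e_def)
    have "Inf (dist a ` C) < infdist a C + e" using e0 infdist_notempty[OF ne, of a] by simp
    then obtain x where x: "x \<in> C" "dist a x < infdist a C + e"
      using cInf_lessD[of "dist a ` C"] ne by blast
    have "norm (a - x) < sqrt (d^2 + 1/Suc k)" using x(2) by (simp add: e_def d_def dist_norm)
    moreover have "norm (a - x) \<ge> 0" by simp
    ultimately have "norm (a - x)^2 < (sqrt (d^2 + 1/Suc k))^2"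
      by (intro power_strict_mono) auto
    hence "norm (a - x)^2 < d^2 + 1/Suc k" by (simp add: add_nonneg_nonneg)
    thus "\<exists>x\<in>C. norm (a - x)^2 < d^2 + 1/(Suc k)" using x(1) by blast
  qed
  then obtain X where X: "\<And>k. X k \<in> C" "\<And>k. norm (a - X k)^2 < d^2 + 1/(Suc k)"
    by metis
  have dist_bd: "norm (X k - X m)^2 \<le> 2/Suc k + 2/Suc m" for k m
  proof -
    have "(1/2) *\<^sub>R (X k + X m) \<in> C"
      using convexD[OF cv X(1)[of k] X(1)[of m], of "1/2" "1/2"] by (simp add: algebra_simps)
    hence "d \<le> norm (a - (1/2) *\<^sub>R (X k + X m))" by (rule dle)
    hence "d^2 \<le> norm (a - (1/2) *\<^sub>R (X k + X m))^2" using d0 by (intro power_mono) auto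
    thus ?thesis using parallelogram_mid[of "X k" "X m" a] X(2)[of k] X(2)[of m] by linarith
  qed
  have "Cauchy X"
  proof (rule metric_CauchyI)
    fix e :: real assume e: "e > 0"
    obtain N :: nat where N: "4 / e^2 < N" using reals_Archimedean2 by blast
    show "\<exists>M. \<forall>m\<ge>M. \<forall>n\<ge>M. dist (X m) (X n) < e"
    proof (intro exI allI impI)
      fix m n assume mn: "N \<le> m" "N \<le> n"
      have "0 < 4/e^2" using e by simp
      hence "real N > 0" using N by linarith
      hence "N > 0" by simp
      have a: "2 / real (Suc m) \<le> 2 / N" using mn \<open>N > 0\<close> by (intro divide_left_mono) auto
      have b: "2 / real (Suc n) \<le> 2 / N" using mn \<open>N > 0\<close> by (intro divide_left_mono) auto
      have "4 / N < e^2" using N e \<open>N>0\<close> by (simp add: field_simps)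
      hence "norm (X m - X n)^2 < e^2" using dist_bd[of m n] a b by simp
      hence "norm (X m - X n) < e" using e by (smt (verit) power_mono norm_ge_zero)
      thus "dist (X m) (X n) < e" by (simp add: dist_norm)
    qed
  qed
  then obtain p where p: "X \<longlonglongrightarrow> p" using Cauchy_convergent_iff convergent_def by blast
  have pC: "p \<in> C" using closed_sequentially[OF cl] X(1) p by blast
  have "(\<lambda>k. norm (a - X k)^2) \<longlonglongrightarrow> norm (a - p)^2"
    by (intro tendsto_intros p)
  moreover have "(\<lambda>k. d^2 + 1/Suc k) \<longlonglongrightarrow> d^2 + 0"
    by (intro tendsto_add tendsto_const LIMSEQ_Suc[OF lim_1_over_n])
  ultimately have "norm (a - p)^2 \<le> d^2 + 0"
    by (rule LIMSEQ_le) (use X(2) less_imp_le in blast)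
  hence "norm (a - p) \<le> d" using d0 by (simp add: power2_le_iff_abs_le)
  thus ?thesis using pC dle by force
qed

lemma riesz:
  fixes \<phi> :: "'a::{real_inner,complete_space} \<Rightarrow> real"
  assumes bl: "bounded_linear \<phi>"
  shows "\<exists>w. \<forall>z. inner w z = \<phi> z"
proof (cases "\<forall>z. \<phi> z = 0")
  case True thus ?thesis by (intro exI[of _ 0]) simp
next
  case False
  interpret bounded_linear \<phi> by (rule bl)
  obtain x1 where x1: "\<phi> x1 \<noteq> 0" using False by blast
  define x0 where "x0 = (1 / \<phi> x1) *\<^sub>R x1"
  have phix0: "\<phi> x0 = 1" using x1 by (simp add: x0_def scale)
  define C where "C = {x. \<phi> x = 0}"
  have clC: "closed C" unfolding C_def
    by (intro closed_Collect_eq continuous_on_const linear_continuous_on bl)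
  have cvC: "convex C" unfolding C_def convex_def by (simp add: add scale)
  have neC: "C \<noteq> {}" unfolding C_def using zero by blast
  obtain p where pC: "p \<in> C" and pmin: "\<And>x. x \<in> C \<Longrightarrow> norm (x0 - p) \<le> norm (x0 - x)"
    using closest_point_complete[OF clC cvC neC, of x0] by blast
  define y where "y = x0 - p"
  have phiy: "\<phi> y = 1" using pC phix0 by (simp add: y_def diff C_def)
  have orth: "inner y k = 0" if kC: "k \<in> C" for k
  proof (cases "k = 0")
    case True thus ?thesis by simp
  next
    case False
    define t where "t = inner y k / inner k k"
    have "p + t *\<^sub>R k \<in> C" using pC kC by (simp add: C_def add scale)
    hence "norm y \<le> norm (y - t *\<^sub>R k)" using pmin[of "p + t *\<^sub>R k"] by (simp add: y_def algebra_simps)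
    hence "norm y ^2 \<le> norm (y - t *\<^sub>R k)^2" by (simp add: power_mono)
    hence "inner y y \<le> inner y y - 2 * t * inner y k + t * t * inner k k"
      by (simp add: power2_norm_eq_inner inner_diff_left inner_diff_right inner_commute algebra_simps)
    moreover have "inner k k > 0" using False by simp
    ultimately have "0 \<le> - (inner y k)\<^sup>2 / inner k k"
      by (simp add: t_def field_simps power2_eq_square)
    moreover have "0 \<le> (inner y k)\<^sup>2 / inner k k" using \<open>inner k k > 0\<close> by simp
    ultimately have "(inner y k)\<^sup>2 / inner k k = 0" by linarith
    thus ?thesis using \<open>inner k k > 0\<close> by simp
  qed
  have yy: "inner y y > 0" using phiy zero by (metis inner_gt_zero_iff zero_neq_one)
  show ?thesis
  proof (intro exI allI)
    fix z
    have "z - \<phi> z *\<^sub>R y \<in> C" using phiy by (simp add: C_def diff scale)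
    hence "inner y (z - \<phi> z *\<^sub>R y) = 0" by (rule orth)
    hence "inner y z = \<phi> z * inner y y" by (simp add: inner_diff_right)
    thus "inner ((1 / inner y y) *\<^sub>R y) z = \<phi> z" using yy by simp
  qed
qed




lemma c0_bdd: "x \<in> c0 \<Longrightarrow> bdd_above (range (\<lambda>i. \<bar>x i\<bar>))"
proof -
  assume "x \<in> c0"
  hence "Bseq x" unfolding c0_def using convergent_imp_Bseq convergentI by blast
  then obtain K where "\<And>n. norm (x n) \<le> K" using BseqE by metis
  thus ?thesis by (intro bdd_aboveI[of _ K]) auto
qed

lemma supnorm_ge: "bdd_above (range (\<lambda>i. \<bar>x i\<bar>)) \<Longrightarrow> \<bar>x i\<bar> \<le> supnorm x"
  unfolding supnorm_def by (rule cSUP_upper) auto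

lemma supnorm_le: "(\<And>i. \<bar>x i\<bar> \<le> M) \<Longrightarrow> supnorm x \<le> M"
  unfolding supnorm_def by (rule cSUP_least) auto

lemma supnorm_nonneg: "bdd_above (range (\<lambda>i. \<bar>x i\<bar>)) \<Longrightarrow> 0 \<le> supnorm x"
  using supnorm_ge[of x 0] by linarith

lemma supnorm_zero_iff: "bdd_above (range (\<lambda>i. \<bar>x i\<bar>)) \<Longrightarrow> supnorm x = 0 \<longleftrightarrow> x = (\<lambda>_. 0)"
proof
  assume b: "bdd_above (range (\<lambda>i. \<bar>x i\<bar>))" and "supnorm x = 0"
  hence "\<bar>x i\<bar> \<le> 0" for i using supnorm_ge[OF b, of i] by simp
  thus "x = (\<lambda>_. 0)" by (intro ext) simp
next
  assume "x = (\<lambda>_. 0)" thus "supnorm x = 0" unfolding supnorm_def by simp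
qed

locale opA =
  fixes A :: "'h::real_inner \<Rightarrow> nat \<Rightarrow> real"
  assumes bl: "bounded_linear_c0 A"
begin

lemma add: "A (x + y) = (\<lambda>i. A x i + A y i)"
  using bl unfolding bounded_linear_c0_def by auto
lemma scale: "A (c *\<^sub>R x) = (\<lambda>i. c * A x i)"
  using bl unfolding bounded_linear_c0_def by auto
lemma zero: "A 0 = (\<lambda>_. 0)"
  using scale[of 0 0] by simp
lemma minus: "A (- x) = (\<lambda>i. - A x i)"
  using scale[of "-1" x] by simp
lemma diff: "A (x - y) = (\<lambda>i. A x i - A y i)"
  using add[of x "-y"] minus[of y] by simp
lemma sum: "A (\<Sum>j\<in>J. f j) = (\<lambda>i. \<Sum>j\<in>J. A (f j) i)"
proof (induction J rule: infinite_finite_induct)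
  case (infinite J) thus ?case by (simp add: zero)
next
  case empty thus ?case by (simp add: zero)
next
  case (insert j J) thus ?case by (simp add: add)
qed
lemma inc0: "A z \<in> c0"
  using bl unfolding bounded_linear_c0_def by auto
lemma bdd: "bdd_above (range (\<lambda>i. \<bar>A z i\<bar>))"
  by (rule c0_bdd[OF inc0])
lemma tends0: "(\<lambda>i. A z i) \<longlonglongrightarrow> 0"
  using inc0 unfolding c0_def by auto

lemma bound_ex: "\<exists>C\<ge>0. \<forall>z. supnorm (A z) \<le> C * norm z"
proof -
  obtain C where C: "\<And>z. supnorm (A z) \<le> C * norm z" using bl unfolding bounded_linear_c0_def by blast
  have "supnorm (A z) \<le> max C 0 * norm z" for z
    using C[of z] mult_right_mono[of C "max C 0" "norm z"] by simp
  thus ?thesis by (intro exI[of _ "max C 0"]) auto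
qed

definition CA where "CA = (SOME C. C \<ge> 0 \<and> (\<forall>z. supnorm (A z) \<le> C * norm z))"
lemma CA: "CA \<ge> 0" "supnorm (A z) \<le> CA * norm z"
  using someI_ex[OF bound_ex] unfolding CA_def by auto

lemma coord_le: "\<bar>A z i\<bar> \<le> supnorm (A z)"
  by (rule supnorm_ge[OF bdd])

lemma supnorm_nn: "supnorm (A z) \<ge> 0" by (rule supnorm_nonneg[OF bdd])

end

lemma ell1_summable: "u \<in> ell1 \<Longrightarrow> summable (\<lambda>i. \<bar>u i\<bar>)" unfolding ell1_def by auto

lemma l1norm_nonneg: "u \<in> ell1 \<Longrightarrow> 0 \<le> l1norm u"
  unfolding l1norm_def by (intro suminf_nonneg ell1_summable) auto

lemma pair_summable:
  assumes "u \<in> ell1" and "\<And>i. \<bar>x i\<bar> \<le> K"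
  shows "summable (\<lambda>i. u i * x i)" and "summable (\<lambda>i. \<bar>u i * x i\<bar>)"
    and "\<bar>\<Sum>i. u i * x i\<bar> \<le> l1norm u * K"
proof -
  have s: "summable (\<lambda>i. \<bar>u i\<bar>)" using assms(1) by (rule ell1_summable)
  have K0: "K \<ge> 0" using assms(2)[of 0] by linarith
  have le: "\<bar>u i * x i\<bar> \<le> \<bar>u i\<bar> * K" for i
    unfolding abs_mult by (rule mult_left_mono[OF assms(2)]) simp
  have s2: "summable (\<lambda>i. \<bar>u i\<bar> * K)" using s by (rule summable_mult2)
  show s3: "summable (\<lambda>i. \<bar>u i * x i\<bar>)"
    by (rule summable_comparison_test[OF _ s2]) (use le in auto)
  show "summable (\<lambda>i. u i * x i)" by (rule summable_rabs_cancel[OF s3])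
  have "\<bar>\<Sum>i. u i * x i\<bar> \<le> (\<Sum>i. \<bar>u i * x i\<bar>)" by (rule summable_rabs[OF s3])
  also have "\<dots> \<le> (\<Sum>i. \<bar>u i\<bar> * K)" by (rule suminf_le[OF le s3 s2])
  also have "\<dots> = l1norm u * K" unfolding l1norm_def using suminf_mult2[OF s] by simp
  finally show "\<bar>\<Sum>i. u i * x i\<bar> \<le> l1norm u * K" .
qed

context opA begin

lemma pairA: assumes "u \<in> ell1"
  shows "summable (\<lambda>i. u i * A z i)" "\<bar>\<Sum>i. u i * A z i\<bar> \<le> l1norm u * supnorm (A z)"
  using pair_summable[OF assms coord_le[of z]] by auto

lemma adj_unique: assumes "\<forall>z. inner w z = (\<Sum>i. u i * A z i)" shows "adj A u = w"
  unfolding adj_def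
proof (rule the_equality)
  show "\<forall>z. inner w z = (\<Sum>i. u i * A z i)" by (rule assms)
  fix w' assume "\<forall>z. inner w' z = (\<Sum>i. u i * A z i)"
  hence "inner (w' - w) (w' - w) = 0" using assms by (simp add: inner_diff_left)
  thus "w' = w" by simp
qed


end

lemma adj_char:
  fixes A :: "'h::{real_inner,complete_space} \<Rightarrow> nat \<Rightarrow> real"
  assumes bl: "bounded_linear_c0 A" and u: "u \<in> ell1"
  shows "inner (adj A u) z = (\<Sum>i. u i * A z i)"
proof -
  interpret opA A by (rule opA.intro[OF bl])
  define \<phi> where "\<phi> z = (\<Sum>i. u i * A z i)" for z
  have "bounded_linear \<phi>"
  proof (rule bounded_linear_intro[of _ "l1norm u * CA"])
    fix x y
    show "\<phi> (x + y) = \<phi> x + \<phi> y"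
      unfolding \<phi>_def add by (simp add: distrib_left suminf_add[OF pairA(1)[OF u] pairA(1)[OF u]])
    fix r :: real
    show "\<phi> (r *\<^sub>R x) = r *\<^sub>R \<phi> x"
      unfolding \<phi>_def scale using suminf_mult[OF pairA(1)[OF u, of x], of r]
      by (simp add: algebra_simps)
    have "\<bar>\<phi> x\<bar> \<le> l1norm u * supnorm (A x)" unfolding \<phi>_def by (rule pairA(2)[OF u])
    also have "\<dots> \<le> l1norm u * (CA * norm x)" by (rule mult_left_mono[OF CA(2) l1norm_nonneg[OF u]])
    finally show "norm (\<phi> x) \<le> norm x * (l1norm u * CA)" by (simp add: algebra_simps)
  qed
  then obtain w where w: "\<forall>z. inner w z = \<phi> z" using riesz by blast
  have "adj A u = w" by (rule adj_unique) (use w in \<open>simp add: \<phi>_def\<close>)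
  thus ?thesis using w \<phi>_def by simp
qed




lemma real_bolzano:
  fixes s :: "nat \<Rightarrow> real"
  assumes "\<And>k. \<bar>s k\<bar> \<le> K"
  shows "\<exists>r. strict_mono r \<and> convergent (\<lambda>k. s (r k))"
proof -
  obtain r where r: "strict_mono r" "monoseq (\<lambda>n. s (r n))" using seq_monosub by blast
  have "Bseq (\<lambda>n. s (r n))" by (rule BseqI'[of _ K]) (use assms in auto)
  thus ?thesis using r Bseq_monoseq_convergent by blast
qed

lemma diag_conv:
  fixes x :: "nat \<Rightarrow> nat \<Rightarrow> real"
  assumes bd: "\<And>i. \<exists>K. \<forall>k. \<bar>x k i\<bar> \<le> K"
  shows "\<exists>r l. strict_mono r \<and> (\<forall>i. (\<lambda>k. x (r k) i) \<longlonglongrightarrow> l i)"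
proof -
  interpret subseqs "\<lambda>i s. convergent (\<lambda>k. x (s k) i)"
  proof
    fix i and s :: "nat \<Rightarrow> nat" assume "strict_mono s"
    obtain K where "\<forall>k. \<bar>x k i\<bar> \<le> K" using bd by blast
    then obtain r where "strict_mono r" "convergent (\<lambda>k. x (s (r k)) i)"
      using real_bolzano[of "\<lambda>k. x (s k) i" K] by blast
    thus "\<exists>r'. strict_mono r' \<and> convergent (\<lambda>k. x ((s \<circ> r') k) i)" by auto
  qed
  have "convergent (\<lambda>k. x ((diagseq \<circ> (+) (Suc i)) k) i)" for i
  proof (rule diagseq_holds)
    fix r s n assume "strict_mono (r::nat\<Rightarrow>nat)" "convergent (\<lambda>k. x (s k) n)"
    thus "convergent (\<lambda>k. x ((s \<circ> r) k) n)"
      unfolding convergent_def o_def using LIMSEQ_subseq_LIMSEQ[of "\<lambda>k. x (s k) n" _ r]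
      by (auto simp: o_def)
  qed
  have "convergent (\<lambda>k. x (diagseq k) i)" for i
  proof -
    obtain L where "(\<lambda>k. x (diagseq (Suc i + k)) i) \<longlonglongrightarrow> L"
      using \<open>\<And>i. convergent (\<lambda>k. x ((diagseq \<circ> (+) (Suc i)) k) i)\<close>[of i]
      unfolding convergent_def o_def by blast
    hence "(\<lambda>k. x (diagseq (k + Suc i)) i) \<longlonglongrightarrow> L" by (simp add: add.commute)
    hence "(\<lambda>k. x (diagseq k) i) \<longlonglongrightarrow> L" by (rule LIMSEQ_offset)
    thus ?thesis unfolding convergent_def by blast
  qed
  hence "\<forall>i. (\<lambda>k. x (diagseq k) i) \<longlonglongrightarrow> lim (\<lambda>k. x (diagseq k) i)"
    using convergent_LIMSEQ_iff by blast
  thus ?thesis using subseq_diagseq by (intro exI[of _ diagseq] exI[of _ "\<lambda>i. lim (\<lambda>k. x (diagseq k) i)"]) simp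
qed

lemma ell1_I: "(\<And>i. \<bar>u i\<bar> \<le> \<bar>v i\<bar> + \<bar>w i\<bar>) \<Longrightarrow> v \<in> ell1 \<Longrightarrow> w \<in> ell1 \<Longrightarrow> u \<in> ell1"
  unfolding ell1_def
  by (auto intro: summable_comparison_test[of "\<lambda>i. \<bar>u i\<bar>" "\<lambda>i. \<bar>v i\<bar> + \<bar>w i\<bar>"] summable_add)

lemma ell1_diff: "v \<in> ell1 \<Longrightarrow> w \<in> ell1 \<Longrightarrow> (\<lambda>i. v i - w i) \<in> ell1"
  by (rule ell1_I[of _ v w]) auto

lemma ell1_add: "v \<in> ell1 \<Longrightarrow> w \<in> ell1 \<Longrightarrow> (\<lambda>i. v i + w i) \<in> ell1"
  by (rule ell1_I[of _ v w]) auto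

lemma l1norm_triangle:
  assumes "v \<in> ell1" "w \<in> ell1" "\<And>i. \<bar>u i\<bar> \<le> \<bar>v i\<bar> + \<bar>w i\<bar>"
  shows "l1norm u \<le> l1norm v + l1norm w"
proof -
  have u: "u \<in> ell1" by (rule ell1_I[OF assms(3) assms(1,2)])
  have sv: "summable (\<lambda>i. \<bar>v i\<bar>)" and sw: "summable (\<lambda>i. \<bar>w i\<bar>)" and su: "summable (\<lambda>i. \<bar>u i\<bar>)"
    using assms u unfolding ell1_def by auto
  have "l1norm u \<le> (\<Sum>i. \<bar>v i\<bar> + \<bar>w i\<bar>)" unfolding l1norm_def
    by (rule suminf_le[OF assms(3) su summable_add[OF sv sw]])
  also have "\<dots> = l1norm v + l1norm w" unfolding l1norm_def by (rule suminf_add[OF sv sw, symmetric])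
  finally show ?thesis .
qed

lemma l1norm_nonneg': "u \<in> ell1 \<Longrightarrow> 0 \<le> l1norm u"
  unfolding l1norm_def ell1_def by (intro suminf_nonneg) auto

lemma partial_le_l1norm: "u \<in> ell1 \<Longrightarrow> (\<Sum>i<N. \<bar>u i\<bar>) \<le> l1norm u"
  unfolding l1norm_def ell1_def by (intro sum_le_suminf) auto

lemma coord_le_l1norm: "u \<in> ell1 \<Longrightarrow> \<bar>u i\<bar> \<le> l1norm u"
proof -
  assume "u \<in> ell1"
  have "0 \<le> (\<Sum>j<i. \<bar>u j\<bar>)" by (intro sum_nonneg) auto
  moreover have "(\<Sum>j<i. \<bar>u j\<bar>) + \<bar>u i\<bar> \<le> l1norm u"
    using partial_le_l1norm[OF \<open>u \<in> ell1\<close>, of "Suc i"] by simp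
  ultimately show ?thesis by linarith
qed

lemma fatou_l1:
  assumes conv: "\<And>i. (\<lambda>k. u k i) \<longlonglongrightarrow> v i"
    and bd: "\<And>k. u k \<in> ell1 \<and> l1norm (u k) \<le> L"
  shows "v \<in> ell1 \<and> l1norm v \<le> L"
proof -
  have ps: "(\<Sum>i<N. \<bar>v i\<bar>) \<le> L" for N
  proof -
    have lim: "(\<lambda>k. \<Sum>i<N. \<bar>u k i\<bar>) \<longlonglongrightarrow> (\<Sum>i<N. \<bar>v i\<bar>)"
      by (intro tendsto_intros conv)
    have le: "(\<Sum>i<N. \<bar>u k i\<bar>) \<le> L" for k
      using partial_le_l1norm[of "u k" N] bd[of k] by linarith
    show ?thesis by (rule LIMSEQ_le_const2[OF lim]) (use le in auto)
  qed
  have s: "summable (\<lambda>i. \<bar>v i\<bar>)"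
  proof (rule bounded_imp_summable[of _ L])
    fix n show "(\<Sum>k\<le>n. \<bar>v k\<bar>) \<le> L" using ps[of "Suc n"] by (simp add: lessThan_Suc_atMost)
  qed auto
  moreover have "l1norm v \<le> L" unfolding l1norm_def by (rule suminf_le_const[OF s ps])
  ultimately show ?thesis unfolding ell1_def by auto
qed

lemma pair_bound:
  assumes "u \<in> ell1" and "\<And>i. \<bar>x i\<bar> \<le> K"
  shows "summable (\<lambda>i. u i * x i)" and "\<bar>\<Sum>i. u i * x i\<bar> \<le> l1norm u * K"
proof -
  have s: "summable (\<lambda>i. \<bar>u i\<bar>)" using assms(1) unfolding ell1_def by auto
  have le: "\<bar>u i * x i\<bar> \<le> \<bar>u i\<bar> * K" for i
    unfolding abs_mult by (rule mult_left_mono[OF assms(2)]) simp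
  have s2: "summable (\<lambda>i. \<bar>u i\<bar> * K)" using s by (rule summable_mult2)
  have s3: "summable (\<lambda>i. \<bar>u i * x i\<bar>)"
    by (rule summable_comparison_test[OF _ s2]) (use le in auto)
  show "summable (\<lambda>i. u i * x i)" by (rule summable_rabs_cancel[OF s3])
  have "\<bar>\<Sum>i. u i * x i\<bar> \<le> (\<Sum>i. \<bar>u i * x i\<bar>)" by (rule summable_rabs[OF s3])
  also have "\<dots> \<le> (\<Sum>i. \<bar>u i\<bar> * K)" by (rule suminf_le[OF le s3 s2])
  also have "\<dots> = l1norm u * K" unfolding l1norm_def using suminf_mult2[OF s] by simp
  finally show "\<bar>\<Sum>i. u i * x i\<bar> \<le> l1norm u * K" .
qed




lemma split_sum_N:
  fixes w x :: "nat \<Rightarrow> real"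
  assumes "summable (\<lambda>i. w i * x i)" "summable (\<lambda>i. w i * (if i < N then 0 else x i))"
  shows "(\<Sum>i. w i * x i) = (\<Sum>i<N. w i * x i) + (\<Sum>i. w i * (if i < N then 0 else x i))"
proof -
  have s1: "summable (\<lambda>i. w i * (if i < N then x i else 0))"
    by (rule summable_finite[of "{..<N}"]) auto
  have "(\<Sum>i. w i * x i) = (\<Sum>i. w i * (if i < N then x i else 0) + w i * (if i < N then 0 else x i))"
    by (intro suminf_cong) auto
  also have "\<dots> = (\<Sum>i. w i * (if i < N then x i else 0)) + (\<Sum>i. w i * (if i < N then 0 else x i))"
    by (rule suminf_add[OF s1 assms(2), symmetric])
  also have "(\<Sum>i. w i * (if i < N then x i else 0)) = (\<Sum>i<N. w i * x i)"
    by (subst suminf_finite[of "{..<N}"]) auto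
  finally show ?thesis .
qed

lemma weak_star:
  assumes conv: "\<And>i. (\<lambda>k. u k i) \<longlonglongrightarrow> v i"
    and bd: "\<And>k. u k \<in> ell1 \<and> l1norm (u k) \<le> M"
    and v: "v \<in> ell1" and x: "x \<longlonglongrightarrow> 0"
  shows "(\<lambda>k. \<Sum>i. u k i * x i) \<longlonglongrightarrow> (\<Sum>i. v i * x i)"
proof -
  obtain Kx where Kx: "\<And>i. \<bar>x i\<bar> \<le> Kx"
    using convergent_imp_Bseq[OF convergentI[OF x]] BseqE by (metis real_norm_def)
  define D where "D k = (\<Sum>i. (u k i - v i) * x i)" for k
  have w1: "(\<lambda>i. u k i - v i) \<in> ell1" for k using ell1_diff bd v by blast
  have nw: "l1norm (\<lambda>i. u k i - v i) \<le> M + l1norm v" for k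
    using l1norm_triangle[of "u k" v "\<lambda>i. u k i - v i"] bd[of k] v by force
  have M0: "0 \<le> M" using bd[of 0] l1norm_nonneg' by force
  have v0: "0 \<le> l1norm v" using l1norm_nonneg'[OF v] .
  have "D \<longlonglongrightarrow> 0"
  proof (rule LIMSEQ_I)
    fix e :: real assume e: "e > 0"
    define B where "B = M + l1norm v + 1"
    have B: "B > 0" using M0 v0 by (simp add: B_def)
    obtain N where N: "\<And>i. i \<ge> N \<Longrightarrow> \<bar>x i\<bar> < e / (2*B)"
      using LIMSEQ_D[OF x, of "e/(2*B)"] e B by auto
    have "(\<lambda>k. \<Sum>i<N. (u k i - v i) * x i) \<longlonglongrightarrow> (\<Sum>i<N. (v i - v i) * x i)"
      by (intro tendsto_intros conv)
    hence "(\<lambda>k. \<Sum>i<N. (u k i - v i) * x i) \<longlonglongrightarrow> 0" by simp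
    then obtain K where K: "\<And>k. k \<ge> K \<Longrightarrow> \<bar>\<Sum>i<N. (u k i - v i) * x i\<bar> < e/2"
      using LIMSEQ_D[of _ 0 "e/2"] e by fastforce
    show "\<exists>no. \<forall>n\<ge>no. norm (D n - 0) < e"
    proof (intro exI allI impI)
      fix k assume k: "k \<ge> K"
      define x' where "x' i = (if i < N then 0 else x i)" for i
      have x'b: "\<bar>x' i\<bar> \<le> e / (2*B)" for i
        using N[of i] e B by (auto simp: x'_def less_imp_le)
      have "D k = (\<Sum>i<N. (u k i - v i) * x i) + (\<Sum>i. (u k i - v i) * x' i)"
        unfolding D_def x'_def
        by (rule split_sum_N) (use pair_bound(1)[OF w1 Kx] pair_bound(1)[OF w1 x'b] x'_def in auto)
      moreover have "\<bar>\<Sum>i. (u k i - v i) * x' i\<bar> \<le> l1norm (\<lambda>i. u k i - v i) * (e / (2*B))"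
        by (rule pair_bound(2)[OF w1 x'b])
      moreover have "l1norm (\<lambda>i. u k i - v i) * (e / (2*B)) \<le> (M + l1norm v) * (e / (2*B))"
        by (rule mult_right_mono[OF nw]) (use e B in simp)
      moreover have "(M + l1norm v) * (e / (2*B)) < e/2"
        using e B M0 v0 by (simp add: B_def field_simps)
      ultimately have "\<bar>D k\<bar> < e" using K[OF k] by linarith
      thus "norm (D k - 0) < e" by simp
    qed
  qed
  moreover have "(\<Sum>i. u k i * x i) = D k + (\<Sum>i. v i * x i)" for k
  proof -
    have "D k = (\<Sum>i. u k i * x i) - (\<Sum>i. v i * x i)"
      unfolding D_def left_diff_distrib
      by (rule suminf_diff[OF pair_bound(1)[OF conjunct1[OF bd] Kx] pair_bound(1)[OF v Kx], symmetric])
    thus ?thesis by simp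
  qed
  ultimately show ?thesis using tendsto_add[of D 0 sequentially "\<lambda>_. \<Sum>i. v i * x i"] by simp
qed

lemma radon_riesz:
  assumes conv: "\<And>i. (\<lambda>k. u k i) \<longlonglongrightarrow> v i"
    and u: "\<And>k. u k \<in> ell1" and v: "v \<in> ell1"
    and lim: "\<And>e. e > 0 \<Longrightarrow> \<exists>K. \<forall>k\<ge>K. l1norm (u k) \<le> l1norm v + e"
  shows "(\<lambda>k. l1norm (\<lambda>i. u k i - v i)) \<longlonglongrightarrow> 0"
proof (rule LIMSEQ_I)
  fix e :: real assume e: "e > 0"
  define e5 where "e5 = e / 5"
  have e5: "e5 > 0" using e by (simp add: e5_def)
  have sv: "summable (\<lambda>i. \<bar>v i\<bar>)" using v unfolding ell1_def by auto
  have "(\<lambda>n. \<Sum>i<n. \<bar>v i\<bar>) \<longlonglongrightarrow> l1norm v" unfolding l1norm_def by (rule summable_LIMSEQ[OF sv])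
  then obtain N where N: "\<bar>(\<Sum>i<N. \<bar>v i\<bar>) - l1norm v\<bar> < e5"
    using LIMSEQ_D[of _ "l1norm v" e5] e5 by fastforce
  have t1: "(\<lambda>k. \<Sum>i<N. \<bar>u k i - v i\<bar>) \<longlonglongrightarrow> (\<Sum>i<N. \<bar>v i - v i\<bar>)"
    by (intro tendsto_intros conv)
  then obtain K1 where K1: "\<And>k. k \<ge> K1 \<Longrightarrow> \<bar>(\<Sum>i<N. \<bar>u k i - v i\<bar>)\<bar> < e5"
    using LIMSEQ_D[of _ 0 e5] e5 by fastforce
  have t2: "(\<lambda>k. \<Sum>i<N. \<bar>u k i\<bar>) \<longlonglongrightarrow> (\<Sum>i<N. \<bar>v i\<bar>)"
    by (intro tendsto_intros conv)
  then obtain K2 where K2: "\<And>k. k \<ge> K2 \<Longrightarrow> \<bar>(\<Sum>i<N. \<bar>u k i\<bar>) - (\<Sum>i<N. \<bar>v i\<bar>)\<bar> < e5"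
    using LIMSEQ_D[of _ _ e5] e5 by (metis real_norm_def)
  obtain K3 where K3: "\<And>k. k \<ge> K3 \<Longrightarrow> l1norm (u k) \<le> l1norm v + e5" using lim[OF e5] by blast
  show "\<exists>no. \<forall>n\<ge>no. norm (l1norm (\<lambda>i. u n i - v i) - 0) < e"
  proof (intro exI[of _ "max K1 (max K2 K3)"] allI impI)
    fix k assume "max K1 (max K2 K3) \<le> k"
    hence k: "k \<ge> K1" "k \<ge> K2" "k \<ge> K3" by auto
    have su: "summable (\<lambda>i. \<bar>u k i\<bar>)" using u[of k] unfolding ell1_def by auto
    have wd: "(\<lambda>i. u k i - v i) \<in> ell1" using ell1_diff u v by blast
    have sd: "summable (\<lambda>i. \<bar>u k i - v i\<bar>)" using wd unfolding ell1_def by auto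
    have sut: "summable (\<lambda>j. \<bar>u k (j + N)\<bar>)" by (rule summable_ignore_initial_segment[OF su])
    have svt: "summable (\<lambda>j. \<bar>v (j + N)\<bar>)" by (rule summable_ignore_initial_segment[OF sv])
    have sdt: "summable (\<lambda>j. \<bar>u k (j + N) - v (j + N)\<bar>)" using summable_ignore_initial_segment[OF sd, of N] by simp
    have e1: "l1norm (\<lambda>i. u k i - v i) = (\<Sum>j. \<bar>u k (j + N) - v (j + N)\<bar>) + (\<Sum>i<N. \<bar>u k i - v i\<bar>)"
      unfolding l1norm_def by (rule suminf_split_initial_segment[OF sd])
    have e2: "(\<Sum>j. \<bar>u k (j + N) - v (j + N)\<bar>) \<le> (\<Sum>j. \<bar>u k (j + N)\<bar> + \<bar>v (j + N)\<bar>)"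
      by (rule suminf_le[OF _ sdt summable_add[OF sut svt]]) auto
    have e3: "(\<Sum>j. \<bar>u k (j + N)\<bar> + \<bar>v (j + N)\<bar>) = (\<Sum>j. \<bar>u k (j + N)\<bar>) + (\<Sum>j. \<bar>v (j + N)\<bar>)"
      by (rule suminf_add[OF sut svt, symmetric])
    have e4: "(\<Sum>j. \<bar>u k (j + N)\<bar>) = l1norm (u k) - (\<Sum>i<N. \<bar>u k i\<bar>)"
      unfolding l1norm_def using suminf_split_initial_segment[OF su, of N] by simp
    have e5': "(\<Sum>j. \<bar>v (j + N)\<bar>) = l1norm v - (\<Sum>i<N. \<bar>v i\<bar>)"
      unfolding l1norm_def using suminf_split_initial_segment[OF sv, of N] by simp
    have fin: "l1norm (\<lambda>i. u k i - v i) \<le> l1norm (u k) - (\<Sum>i<N. \<bar>u k i\<bar>) + (l1norm v - (\<Sum>i<N. \<bar>v i\<bar>)) + (\<Sum>i<N. \<bar>u k i - v i\<bar>)"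
      using e1 e2 e3 e4 e5' by linarith
    have a1: "(\<Sum>i<N. \<bar>u k i - v i\<bar>) < e5" using K1[OF k(1)] by simp
    have a2: "(\<Sum>i<N. \<bar>v i\<bar>) - (\<Sum>i<N. \<bar>u k i\<bar>) < e5" using K2[OF k(2)] by (simp add: abs_less_iff)
    have a3: "l1norm v - (\<Sum>i<N. \<bar>v i\<bar>) < e5" using N by (simp add: abs_less_iff)
    have "l1norm (\<lambda>i. u k i - v i) < e"
      using fin a1 a2 a3 K3[OF k(3)] by (simp add: e5_def)
    moreover have "0 \<le> l1norm (\<lambda>i. u k i - v i)" using l1norm_nonneg'[OF wd] .
    ultimately show "norm (l1norm (\<lambda>i. u k i - v i) - 0) < e" by simp
  qed
qed




lemma key_conv:
  fixes A :: "'h::{real_inner,complete_space} \<Rightarrow> nat \<Rightarrow> real"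
    and S :: "nat \<Rightarrow> 'h set"
  assumes bl: "bounded_linear_c0 A"
    and U: "\<And>n. U n \<in> ell1 \<and> l1norm (U n) \<le> M"
    and u0: "u0 \<in> ell1" "adj A u0 = f"
    and S0: "\<And>n. S n \<noteq> {}"
    and appr: "(\<lambda>n. INF zn\<in>S n. supnorm (A (z - zn))) \<longlonglongrightarrow> 0"
    and E: "\<And>n. E n \<ge> 0" "E \<longlonglongrightarrow> 0"
    and feas: "\<And>n zn. zn \<in> S n \<Longrightarrow> \<bar>(\<Sum>i. U n i * A zn i) - inner zn f\<bar> \<le> E n * supnorm (A zn)"
  shows "(\<lambda>n. \<Sum>i. U n i * A z i) \<longlonglongrightarrow> inner z f"
proof -
  interpret opA A by (rule opA.intro[OF bl])
  define I where "I n = (INF zn\<in>S n. supnorm (A (z - zn)))" for n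
  have bb: "bdd_below ((\<lambda>zn. supnorm (A (z - zn))) ` S n)" for n
    by (rule bdd_belowI[of _ 0]) (auto intro: supnorm_nn)
  have I0: "I n \<ge> 0" for n unfolding I_def using S0 by (intro cINF_greatest) (auto intro: supnorm_nn)
  have "\<forall>n. \<exists>zn\<in>S n. supnorm (A (z - zn)) < I n + 1/Suc n"
  proof
    fix n
    have "Inf ((\<lambda>zn. supnorm (A (z - zn))) ` S n) < I n + 1/Suc n" unfolding I_def by simp
    thus "\<exists>zn\<in>S n. supnorm (A (z - zn)) < I n + 1/Suc n"
      using cInf_lessD[of "(\<lambda>zn. supnorm (A (z - zn))) ` S n"] S0[of n] by blast
  qed
  then obtain Z where Z: "\<And>n. Z n \<in> S n" "\<And>n. supnorm (A (z - Z n)) < I n + 1/Suc n" by metis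
  define a where "a n = supnorm (A (z - Z n))" for n
  have a0: "a n \<ge> 0" for n unfolding a_def by (rule supnorm_nn)
  have "(\<lambda>n. I n + 1/Suc n) \<longlonglongrightarrow> 0 + 0"
    using appr unfolding I_def by (intro tendsto_add LIMSEQ_Suc[OF lim_1_over_n])
  hence lim': "(\<lambda>n. I n + 1/Suc n) \<longlonglongrightarrow> 0" by simp
  have ev1: "\<forall>n. 0 \<le> a n" using a0 by blast
  have ev2: "\<forall>n. a n \<le> I n + 1/Suc n" using Z(2) unfolding a_def using less_imp_le by blast
  have alim: "a \<longlonglongrightarrow> 0"
    by (rule tendsto_sandwich[OF always_eventually[OF ev1] always_eventually[OF ev2] tendsto_const lim'])
  define bnd where "bnd n = M * a n + E n * (supnorm (A z) + a n) + l1norm u0 * a n" for n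
  have "bnd \<longlonglongrightarrow> M * 0 + 0 * (supnorm (A z) + 0) + l1norm u0 * 0"
    unfolding bnd_def by (intro tendsto_intros alim E(2))
  hence bndlim: "bnd \<longlonglongrightarrow> 0" by simp
  have le: "norm ((\<Sum>i. U n i * A z i) - inner z f) \<le> bnd n" for n
  proof -
    let ?w = "z - Z n"
    have s1: "summable (\<lambda>i. U n i * A ?w i)" "summable (\<lambda>i. U n i * A (Z n) i)"
      using pairA(1) U by blast+
    have sp: "(\<Sum>i. U n i * A z i) = (\<Sum>i. U n i * A ?w i) + (\<Sum>i. U n i * A (Z n) i)"
    proof -
      have ai: "A z i = A ?w i + A (Z n) i" for i using diff[of z "Z n"] by simp
      have "(\<lambda>i. U n i * A z i) = (\<lambda>i. U n i * A ?w i + U n i * A (Z n) i)"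
        by (rule ext) (metis ai distrib_left)
      thus ?thesis using suminf_add[OF s1] by simp
    qed
    have fz: "inner z f = inner ?w f + inner (Z n) f" by (simp add: inner_diff_left)
    have fw: "inner ?w f = (\<Sum>i. u0 i * A ?w i)"
      using adj_char[OF bl u0(1), of ?w] u0(2) by (simp add: inner_commute)
    have "\<bar>\<Sum>i. U n i * A ?w i\<bar> \<le> l1norm (U n) * a n"
      using pairA(2)[of "U n" ?w] U[of n] unfolding a_def by blast
    moreover have "l1norm (U n) * a n \<le> M * a n" using U[of n] a0[of n] by (intro mult_right_mono) auto
    ultimately have t1: "\<bar>\<Sum>i. U n i * A ?w i\<bar> \<le> M * a n" by linarith
    have t3: "\<bar>\<Sum>i. u0 i * A ?w i\<bar> \<le> l1norm u0 * a n"
      using pairA(2)[OF u0(1), of ?w] unfolding a_def by simp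
    have "supnorm (A (Z n)) \<le> supnorm (A z) + a n"
    proof -
      have "\<bar>A (Z n) i\<bar> \<le> supnorm (A z) + a n" for i
      proof -
        have "A (Z n) i = A z i - A ?w i" using diff[of z "Z n"] by (simp add: fun_eq_iff)
        thus ?thesis using coord_le[of z i] coord_le[of ?w i] unfolding a_def by linarith
      qed
      thus ?thesis by (rule supnorm_le)
    qed
    hence t2: "\<bar>(\<Sum>i. U n i * A (Z n) i) - inner (Z n) f\<bar> \<le> E n * (supnorm (A z) + a n)"
      using feas[OF Z(1)[of n]] mult_left_mono[OF _ E(1)[of n]] by (meson order_trans)
    show ?thesis using t1 t2 t3 sp fz fw unfolding bnd_def real_norm_def by linarith
  qed
  have "(\<lambda>n. (\<Sum>i. U n i * A z i) - inner z f) \<longlonglongrightarrow> 0"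
    by (rule Lim_null_comparison[OF _ bndlim]) (use le in auto)
  thus ?thesis using Lim_null[symmetric] by (simp add: LIM_zero_iff)
qed

lemma conclude:
  fixes A :: "'h::{real_inner,complete_space} \<Rightarrow> nat \<Rightarrow> real"
  assumes bl: "bounded_linear_c0 A"
    and U: "\<And>n. U n \<in> ell1 \<and> l1norm (U n) \<le> M"
    and wk: "\<And>z. (\<lambda>n. \<Sum>i. U n i * A z i) \<longlonglongrightarrow> inner z f"
    and opt: "\<And>v e. v \<in> ell1 \<Longrightarrow> adj A v = f \<Longrightarrow> e > 0 \<Longrightarrow> \<exists>K. \<forall>n\<ge>K. l1norm (U n) \<le> l1norm v + e"
  shows "\<exists>r u. strict_mono r \<and> u \<in> ell1 \<and> adj A u = f \<and>
               (\<lambda>k. l1norm (\<lambda>i. U (r k) i - u i)) \<longlonglongrightarrow> 0"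
proof -
  interpret opA A by (rule opA.intro[OF bl])
  have "\<bar>U k i\<bar> \<le> M" for k i
    using coord_le_l1norm[of "U k" i] U[of k] by linarith
  hence "\<exists>K. \<forall>k. \<bar>U k i\<bar> \<le> K" for i by blast
  then obtain r v where r: "strict_mono r" and rv: "\<And>i. (\<lambda>k. U (r k) i) \<longlonglongrightarrow> v i"
    using diag_conv[of U] by blast
  have v: "v \<in> ell1" using fatou_l1[of "\<lambda>k. U (r k)" v M] rv U by blast
  have "inner f z = (\<Sum>i. v i * A z i)" for z
  proof -
    have l1: "(\<lambda>k. \<Sum>i. U (r k) i * A z i) \<longlonglongrightarrow> (\<Sum>i. v i * A z i)"
      by (rule weak_star[OF rv _ v tends0]) (use U in blast)
    have l2: "(\<lambda>k. \<Sum>i. U (r k) i * A z i) \<longlonglongrightarrow> inner z f"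
      using LIMSEQ_subseq_LIMSEQ[OF wk r, of z] by (simp add: o_def)
    show ?thesis using LIMSEQ_unique[OF l2 l1] by (simp add: inner_commute)
  qed
  hence av: "adj A v = f" by (intro adj_unique) auto
  have "(\<lambda>k. l1norm (\<lambda>i. U (r k) i - v i)) \<longlonglongrightarrow> 0"
  proof (rule radon_riesz[OF rv _ v])
    show "U (r k) \<in> ell1" for k using U by blast
    fix e :: real assume "e > 0"
    then obtain K where K: "\<forall>n\<ge>K. l1norm (U n) \<le> l1norm v + e" using opt[OF v av] by blast
    have "\<forall>k\<ge>K. l1norm (U (r k)) \<le> l1norm v + e"
    proof (intro allI impI)
      fix k assume "K \<le> k"
      hence "K \<le> r k" using seq_suble[OF r, of k] by linarith
      thus "l1norm (U (r k)) \<le> l1norm v + e" using K by blast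
    qed
    thus "\<exists>K. \<forall>k\<ge>K. l1norm (U (r k)) \<le> l1norm v + e" by blast
  qed
  thus ?thesis using r v av by blast
qed




definition onb :: "'h::real_inner set \<Rightarrow> 'h set \<Rightarrow> bool" where
  "onb E S \<longleftrightarrow> finite E \<and> E \<subseteq> S \<and> (\<forall>e\<in>E. norm e = 1) \<and>
     (\<forall>e\<in>E. \<forall>e'\<in>E. e \<noteq> e' \<longrightarrow> inner e e' = 0) \<and> (\<forall>z\<in>S. z = (\<Sum>e\<in>E. inner e z *\<^sub>R e)) \<and> subspace S"

lemma span_scale_insert:
  fixes x :: "'h::real_vector"
  assumes "c \<noteq> 0"
  shows "span (insert (c *\<^sub>R x) S) = span (insert x S)"
proof
  show "span (insert (c *\<^sub>R x) S) \<subseteq> span (insert x S)"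
    by (rule span_minimal) (auto intro: span_base span_scale simp: subspace_span)
  have "x = (1/c) *\<^sub>R (c *\<^sub>R x)" using assms by simp
  hence "x \<in> span (insert (c *\<^sub>R x) S)" by (metis insertI1 span_base span_scale)
  thus "span (insert x S) \<subseteq> span (insert (c *\<^sub>R x) S)"
    by (intro span_minimal) (auto intro: span_base simp: subspace_span)
qed

lemma orth_sum_inner:
  fixes E :: "'h::real_inner set"
  assumes fin: "finite E" and n1: "\<forall>e\<in>E. norm e = 1" and orth: "\<forall>e\<in>E. \<forall>e'\<in>E. e \<noteq> e' \<longrightarrow> inner e e' = 0"
    and e: "e \<in> E"
  shows "inner e (\<Sum>e'\<in>E. c e' *\<^sub>R e') = c e"
proof -
  have "inner e (\<Sum>e'\<in>E. c e' *\<^sub>R e') = (\<Sum>e'\<in>E. c e' * inner e e')"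
    by (simp add: inner_sum_right)
  also have "\<dots> = c e * inner e e + (\<Sum>e'\<in>E - {e}. c e' * inner e e')"
    by (rule sum.remove[OF fin e])
  also have "(\<Sum>e'\<in>E - {e}. c e' * inner e e') = 0"
    using orth e by (intro sum.neutral) auto
  also have "inner e e = 1" using n1 e by (simp add: dot_square_norm)
  finally show ?thesis by simp
qed

lemma gram_schmidt:
  fixes B :: "'h::real_inner set"
  assumes "finite B"
  shows "\<exists>E. finite E \<and> (\<forall>e\<in>E. norm e = 1) \<and> (\<forall>e\<in>E. \<forall>e'\<in>E. e \<noteq> e' \<longrightarrow> inner e e' = 0) \<and> span E = span B"
  using assms
proof (induction B rule: finite_induct)
  case empty thus ?case by (intro exI[of _ "{}"]) auto
next
  case (insert b B)
  then obtain E where E: "finite E" "\<forall>e\<in>E. norm e = 1" "\<forall>e\<in>E. \<forall>e'\<in>E. e \<noteq> e' \<longrightarrow> inner e e' = 0"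
    "span E = span B" by blast
  define p where "p = (\<Sum>e\<in>E. inner e b *\<^sub>R e)"
  define b' where "b' = b - p"
  have pE: "p \<in> span E" unfolding p_def by (intro span_sum span_scale span_base) auto
  have ob: "inner e b' = 0" if "e \<in> E" for e
    using orth_sum_inner[OF E(1-3) that, of "\<lambda>e. inner e b"] unfolding b'_def p_def
    by (simp add: inner_diff_right)
  have sp1: "span (insert b B) = span (insert b E)"
    unfolding span_insert using E(4) by simp
  show ?case
  proof (cases "b' = 0")
    case True
    hence "b \<in> span E" using pE b'_def by simp
    hence "span (insert b E) = span E" by (rule span_redundant)
    hence "span E = span (insert b B)" using sp1 by simp
    thus ?thesis using E(1-3) by blast
  next
    case False
    define e0 where "e0 = (1 / norm b') *\<^sub>R b'"
    have ne0: "norm e0 = 1" using False by (simp add: e0_def)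
    have oe0: "inner e0 e = 0" "inner e e0 = 0" if "e \<in> E" for e
      using ob[OF that] by (auto simp: e0_def inner_commute)
    have "span (insert e0 E) = span (insert b' E)" unfolding e0_def
      by (rule span_scale_insert) (use False in simp)
    also have "\<dots> = span (insert b E)"
      by (rule eq_span_insert_eq) (use pE in \<open>simp add: b'_def span_neg\<close>)
    finally have "span (insert e0 E) = span (insert b B)" using sp1 by simp
    moreover have "\<forall>e\<in>insert e0 E. norm e = 1" using E(2) ne0 by auto
    moreover have "\<forall>e\<in>insert e0 E. \<forall>e'\<in>insert e0 E. e \<noteq> e' \<longrightarrow> inner e e' = 0"
      using E(3) oe0 by auto
    ultimately show ?thesis using E(1) by (intro exI[of _ "insert e0 E"]) auto
  qed
qed

lemma onb_rep:
  fixes E :: "'h::real_inner set"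
  assumes fin: "finite E" and n1: "\<forall>e\<in>E. norm e = 1" and orth: "\<forall>e\<in>E. \<forall>e'\<in>E. e \<noteq> e' \<longrightarrow> inner e e' = 0"
    and z: "z \<in> span E"
  shows "z = (\<Sum>e\<in>E. inner e z *\<^sub>R e)"
proof -
  show ?thesis
  proof (rule span_induct[OF z, where P = "\<lambda>z. z = (\<Sum>e\<in>E. inner e z *\<^sub>R e)"])
    show "subspace {z. z = (\<Sum>e\<in>E. inner e z *\<^sub>R e)}"
    proof (rule subspaceI)
      show "0 \<in> {z. z = (\<Sum>e\<in>E. inner e z *\<^sub>R e)}" by simp
      fix x y assume hx: "x \<in> {z. z = (\<Sum>e\<in>E. inner e z *\<^sub>R e)}" and hy: "y \<in> {z. z = (\<Sum>e\<in>E. inner e z *\<^sub>R e)}"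
      have "(\<Sum>e\<in>E. inner e (x+y) *\<^sub>R e) = (\<Sum>e\<in>E. inner e x *\<^sub>R e) + (\<Sum>e\<in>E. inner e y *\<^sub>R e)"
        by (simp add: inner_add_right scaleR_add_left sum.distrib)
      also have "\<dots> = x + y" using hx hy by simp
      finally show "x + y \<in> {z. z = (\<Sum>e\<in>E. inner e z *\<^sub>R e)}" by simp
    next
      fix c :: real and x assume hx: "x \<in> {z. z = (\<Sum>e\<in>E. inner e z *\<^sub>R e)}"
      have "(\<Sum>e\<in>E. inner e (c *\<^sub>R x) *\<^sub>R e) = c *\<^sub>R (\<Sum>e\<in>E. inner e x *\<^sub>R e)"
        by (simp add: scaleR_sum_right)
      also have "\<dots> = c *\<^sub>R x" using hx by simp
      finally show "c *\<^sub>R x \<in> {z. z = (\<Sum>e\<in>E. inner e z *\<^sub>R e)}" by simp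
    qed
  next
    fix x assume x: "x \<in> E"
    have "(\<Sum>e\<in>E. inner e x *\<^sub>R e) = inner x x *\<^sub>R x + (\<Sum>e\<in>E - {x}. inner e x *\<^sub>R e)"
      by (rule sum.remove[OF fin x])
    also have "(\<Sum>e\<in>E - {x}. inner e x *\<^sub>R e) = 0" using orth x by (intro sum.neutral) auto
    also have "inner x x = 1" using n1 x by (simp add: dot_square_norm)
    finally show "x = (\<Sum>e\<in>E. inner e x *\<^sub>R e)" by simp
  qed
qed

lemma fd_onb:
  fixes S :: "'h::real_inner set"
  assumes sub: "subspace S" and d: "dim S = n" and n: "n \<ge> 1"
  shows "\<exists>E. onb E S"
proof -
  obtain B where B: "B \<subseteq> S" "independent B" "S \<subseteq> span B" "card B = dim S"
    using basis_exists by blast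
  have fB: "finite B" using B(4) d n card.infinite by fastforce
  have SB: "S = span B" using B(1,3) span_minimal[OF B(1) sub] by blast
  obtain E where E: "finite E" "\<forall>e\<in>E. norm e = 1" "\<forall>e\<in>E. \<forall>e'\<in>E. e \<noteq> e' \<longrightarrow> inner e e' = 0" "span E = span B"
    using gram_schmidt[OF fB] by blast
  have "E \<subseteq> S" using E(4) SB span_superset by blast
  moreover have "\<forall>z\<in>S. z = (\<Sum>e\<in>E. inner e z *\<^sub>R e)" using onb_rep[OF E(1-3)] E(4) SB by blast
  ultimately show ?thesis unfolding onb_def using E sub by blast
qed

lemma onb_in_span:
  assumes "onb E S" "z \<in> S" shows "(\<Sum>e\<in>E. c e *\<^sub>R e) \<in> S"
  using assms unfolding onb_def by (intro subspace_sum subspace_scale) auto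

lemma fd_equiv:
  fixes A :: "'h::real_inner \<Rightarrow> nat \<Rightarrow> real"
  assumes bl: "bounded_linear_c0 A" and onb: "onb E S"
    and inj: "\<And>z. z \<in> S \<Longrightarrow> A z = (\<lambda>_. 0) \<Longrightarrow> z = 0"
  shows "\<exists>c\<ge>0. \<forall>z\<in>S. norm z \<le> c * supnorm (A z)"
proof (rule ccontr)
  interpret opA A by (rule opA.intro[OF bl])
  have fin: "finite E" and ES: "E \<subseteq> S" and n1: "\<forall>e\<in>E. norm e = 1"
    and rep: "\<forall>z\<in>S. z = (\<Sum>e\<in>E. inner e z *\<^sub>R e)" and sub: "subspace S"
    using onb unfolding onb_def by auto
  assume "\<not> (\<exists>c\<ge>0. \<forall>z\<in>S. norm z \<le> c * supnorm (A z))"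
  hence "\<forall>k::nat. \<exists>z\<in>S. norm z > real (Suc k) * supnorm (A z)"
    by (metis not_le of_nat_0_le_iff)
  then obtain Z where Z: "\<And>k. Z k \<in> S" "\<And>k. norm (Z k) > real (Suc k) * supnorm (A (Z k))"
    by metis
  have Z0: "Z k \<noteq> 0" for k using Z(2)[of k] by (auto simp: zero supnorm_def)
  define Y where "Y k = (1 / norm (Z k)) *\<^sub>R Z k" for k
  have YS: "Y k \<in> S" for k unfolding Y_def by (rule subspace_scale[OF sub Z(1)])
  have Yn: "norm (Y k) = 1" for k using Z0[of k] by (simp add: Y_def)
  have Ys: "supnorm (A (Y k)) \<le> 1 / real (Suc k)" for k
  proof (rule supnorm_le)
    fix i
    have "\<bar>A (Y k) i\<bar> = \<bar>A (Z k) i\<bar> / norm (Z k)" unfolding Y_def scale by (simp add: abs_mult)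
    also have "\<dots> \<le> supnorm (A (Z k)) / norm (Z k)"
      by (rule divide_right_mono[OF coord_le]) simp
    also have "\<dots> \<le> 1 / real (Suc k)"
      using Z(2)[of k] Z0[of k] by (simp add: divide_simps mult.commute)
    finally show "\<bar>A (Y k) i\<bar> \<le> 1 / real (Suc k)" .
  qed
  define ix where "ix = from_nat_into E"
  have bdx: "\<exists>K. \<forall>k. \<bar>inner (ix i) (Y k)\<bar> \<le> K" for i
  proof (intro exI allI)
    fix k show "\<bar>inner (ix i) (Y k)\<bar> \<le> norm (ix i)"
      using Cauchy_Schwarz_ineq2[of "ix i" "Y k"] Yn[of k] by simp
  qed
  obtain r l where r: "strict_mono r" and rl: "\<And>i. (\<lambda>k. inner (ix i) (Y (r k))) \<longlonglongrightarrow> l i"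
    using diag_conv[of "\<lambda>k i. inner (ix i) (Y k)", OF bdx] by blast
  define L where "L e = l (SOME i. ix i = e)" for e
  have Le: "(\<lambda>k. inner e (Y (r k))) \<longlonglongrightarrow> L e" if "e \<in> E" for e
  proof -
    have "\<exists>i. ix i = e" unfolding ix_def by (rule from_nat_into_surj[OF countable_finite[OF fin] that])
    hence "ix (SOME i. ix i = e) = e" by (rule someI_ex)
    thus ?thesis using rl[of "SOME i. ix i = e"] unfolding L_def by simp
  qed
  define \<zeta> where "\<zeta> = (\<Sum>e\<in>E. L e *\<^sub>R e)"
  have Yrep: "Y (r k) = (\<Sum>e\<in>E. inner e (Y (r k)) *\<^sub>R e)" for k using rep YS by blast
  have "(\<lambda>k. \<Sum>e\<in>E. inner e (Y (r k)) *\<^sub>R e) \<longlonglongrightarrow> \<zeta>"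
    unfolding \<zeta>_def by (intro tendsto_sum tendsto_scaleR Le tendsto_const)
  hence Ylim: "(\<lambda>k. Y (r k)) \<longlonglongrightarrow> \<zeta>" using Yrep by simp
  have \<zeta>S: "\<zeta> \<in> S" unfolding \<zeta>_def using ES sub by (intro subspace_sum subspace_scale) auto
  have "(\<lambda>k. norm (Y (r k))) \<longlonglongrightarrow> norm \<zeta>" by (rule tendsto_norm[OF Ylim])
  hence n\<zeta>: "norm \<zeta> = 1" using Yn by (simp add: LIMSEQ_const_iff)
  have "A \<zeta> i = 0" for i
  proof -
    define g where "g k = 1 / real (Suc (r k)) + CA * norm (\<zeta> - Y (r k))" for k
    have l1: "(\<lambda>k. 1 / real (Suc (r k))) \<longlonglongrightarrow> 0"
      using LIMSEQ_subseq_LIMSEQ[OF LIMSEQ_Suc[OF lim_1_over_n] r] by (simp add: o_def)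
    have l2: "(\<lambda>k. norm (\<zeta> - Y (r k))) \<longlonglongrightarrow> 0"
      using tendsto_norm[OF tendsto_diff[OF tendsto_const Ylim, of \<zeta>]] by simp
    have gl: "g \<longlonglongrightarrow> 0 + CA * 0" unfolding g_def by (intro tendsto_intros l1 l2)
    have "\<bar>A \<zeta> i\<bar> \<le> g k" for k
    proof -
      have "A \<zeta> i = A (Y (r k)) i + A (\<zeta> - Y (r k)) i" using diff[of \<zeta> "Y (r k)"] by simp
      moreover have "\<bar>A (Y (r k)) i\<bar> \<le> 1 / real (Suc (r k))" using coord_le Ys order_trans by blast
      moreover have "\<bar>A (\<zeta> - Y (r k)) i\<bar> \<le> CA * norm (\<zeta> - Y (r k))" using coord_le CA(2) order_trans by blast
      ultimately show ?thesis unfolding g_def by linarith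
    qed
    hence "\<bar>A \<zeta> i\<bar> \<le> 0" using LIMSEQ_le_const[OF gl[simplified]] by blast
    thus ?thesis by simp
  qed
  hence "\<zeta> = 0" using inj[OF \<zeta>S] by (simp add: fun_eq_iff)
  thus False using n\<zeta> by simp
qed




lemma closest_var:
  fixes K :: "'h::real_inner set"
  assumes cv: "convex K" and p: "p \<in> K" and min: "\<forall>x\<in>K. norm (t - p) \<le> norm (t - x)" and k: "k \<in> K"
  shows "inner (t - p) (k - p) \<le> 0"
proof (rule ccontr)
  define c where "c = t - p"
  define d where "d = k - p"
  define a where "a = inner c d"
  define b where "b = inner d d"
  assume "\<not> inner (t - p) (k - p) \<le> 0"
  hence a0: "a > 0" by (simp add: a_def c_def d_def)
  hence "d \<noteq> 0" by (auto simp: a_def)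
  hence b0: "b > 0" by (simp add: b_def)
  define \<theta> where "\<theta> = min 1 (a / b)"
  have th0: "\<theta> > 0" using a0 b0 by (simp add: \<theta>_def)
  have th1: "\<theta> \<le> 1" by (simp add: \<theta>_def)
  have thb: "\<theta> * b \<le> a" using b0 by (simp add: \<theta>_def min_def field_simps split: if_splits)
  have "(1 - \<theta>) *\<^sub>R p + \<theta> *\<^sub>R k \<in> K" by (rule convexD[OF cv p k]) (use th0 th1 in auto)
  hence "norm c \<le> norm (t - ((1 - \<theta>) *\<^sub>R p + \<theta> *\<^sub>R k))" using min unfolding c_def by blast
  also have "t - ((1 - \<theta>) *\<^sub>R p + \<theta> *\<^sub>R k) = c - \<theta> *\<^sub>R d"
    by (simp add: c_def d_def algebra_simps)
  finally have "norm c ^ 2 \<le> norm (c - \<theta> *\<^sub>R d) ^ 2" by (simp add: power_mono)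
  hence "inner c c \<le> inner c c - 2 * \<theta> * a + \<theta> * \<theta> * b"
    by (simp add: power2_norm_eq_inner inner_diff_left inner_diff_right a_def b_def inner_commute algebra_simps)
  hence "2 * \<theta> * a \<le> \<theta> * (\<theta> * b)" by (simp add: algebra_simps)
  hence "2 * a \<le> \<theta> * b" using th0 by (simp add: mult.assoc)
  thus False using thb a0 by linarith
qed

lemma fin_ell1:
  fixes w :: "nat \<Rightarrow> real"
  assumes z: "\<And>j. j \<ge> N \<Longrightarrow> w j = 0"
  shows "w \<in> ell1" "l1norm w = (\<Sum>j<N. \<bar>w j\<bar>)" "(\<Sum>j. w j * x j) = (\<Sum>j<N. w j * x j)"
proof -
  have "summable (\<lambda>j. \<bar>w j\<bar>)" by (rule summable_finite[of "{..<N}"]) (use z not_le in auto)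
  thus "w \<in> ell1" unfolding ell1_def by simp
  show "l1norm w = (\<Sum>j<N. \<bar>w j\<bar>)" unfolding l1norm_def by (rule suminf_finite) (auto simp: z)
  show "(\<Sum>j. w j * x j) = (\<Sum>j<N. w j * x j)" by (rule suminf_finite) (auto simp: z)
qed

lemma hb:
  fixes A :: "'h::real_inner \<Rightarrow> nat \<Rightarrow> real"
  assumes bl: "bounded_linear_c0 A" and onb: "onb E S"
    and inj: "\<And>z. z \<in> S \<Longrightarrow> A z = (\<lambda>_. 0) \<Longrightarrow> z = 0"
    and M0: "M0 \<ge> 0" and eta: "\<eta> > 0" and hyp: "\<And>z. z \<in> S \<Longrightarrow> \<bar>inner z g\<bar> \<le> M0 * supnorm (A z)"
  shows "\<exists>w\<in>ell1. l1norm w \<le> M0 + \<eta> \<and> (\<forall>z\<in>S. (\<Sum>i. w i * A z i) = inner z g)"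
proof -
  interpret opA A by (rule opA.intro[OF bl])
  have fin: "finite E" and ES: "E \<subseteq> S" and n1: "\<forall>e\<in>E. norm e = 1"
    and rep: "\<forall>z\<in>S. z = (\<Sum>e\<in>E. inner e z *\<^sub>R e)" and sub: "subspace S"
    using onb unfolding onb_def by auto
  obtain c where c0: "c \<ge> 0" and c: "\<forall>z\<in>S. norm z \<le> c * supnorm (A z)"
    using fd_equiv[OF bl onb inj] by blast
  have Arep: "A z i = (\<Sum>e\<in>E. inner e z * A e i)" if z: "z \<in> S" for z i
  proof -
    have "A z i = A (\<Sum>e\<in>E. inner e z *\<^sub>R e) i" using rep z by metis
    thus ?thesis by (simp add: sum scale)
  qed
  define \<epsilon> where "\<epsilon> i = (\<Sum>e\<in>E. \<bar>A e i\<bar>)" for i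
  have "\<epsilon> \<longlonglongrightarrow> (\<Sum>e\<in>E. 0)" unfolding \<epsilon>_def by (intro tendsto_sum tendsto_rabs_zero tends0)
  hence el: "\<epsilon> \<longlonglongrightarrow> 0" by simp
  have e0: "\<epsilon> i \<ge> 0" for i unfolding \<epsilon>_def by (intro sum_nonneg) auto
  have Ale: "\<bar>A z i\<bar> \<le> norm z * \<epsilon> i" if z: "z \<in> S" for z i
  proof -
    have "\<bar>A z i\<bar> \<le> (\<Sum>e\<in>E. \<bar>inner e z * A e i\<bar>)" unfolding Arep[OF z] by (rule sum_abs)
    also have "\<dots> \<le> (\<Sum>e\<in>E. norm z * \<bar>A e i\<bar>)"
    proof (rule sum_mono)
      fix e assume e: "e \<in> E"
      have "\<bar>inner e z\<bar> \<le> norm z" using Cauchy_Schwarz_ineq2[of e z] n1 e by simp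
      thus "\<bar>inner e z * A e i\<bar> \<le> norm z * \<bar>A e i\<bar>" unfolding abs_mult by (rule mult_right_mono) simp
    qed
    also have "\<dots> = norm z * \<epsilon> i" unfolding \<epsilon>_def by (simp add: sum_distrib_left)
    finally show ?thesis .
  qed
  obtain N0 where N0: "\<And>i. i \<ge> N0 \<Longrightarrow> \<bar>\<epsilon> i - 0\<bar> < 1 / (2 * (c + 1))"
    using LIMSEQ_D[OF el, of "1 / (2 * (c + 1))"] c0 by (auto simp: real_norm_def)
  define N where "N = Suc N0"
  have tail: "\<bar>A z i\<bar> \<le> supnorm (A z) / 2" if z: "z \<in> S" and i: "i \<ge> N" for z i
  proof -
    define s where "s = supnorm (A z)"
    have s0: "s \<ge> 0" unfolding s_def by (rule supnorm_nn)
    have ei: "\<epsilon> i \<le> 1 / (2 * (c + 1))" using N0[of i] i e0[of i] by (simp add: N_def)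
    have "\<bar>A z i\<bar> \<le> norm z * \<epsilon> i" by (rule Ale[OF z])
    also have "\<dots> \<le> (c * s) * \<epsilon> i" by (rule mult_right_mono[OF _ e0]) (use c z s_def in blast)
    also have "\<dots> \<le> (c * s) * (1 / (2 * (c + 1)))" by (rule mult_left_mono[OF ei]) (use c0 s0 in simp)
    also have "\<dots> \<le> s / 2"
    proof -
      have "c * s \<le> s * (c + 1)" using s0 by (simp add: algebra_simps)
      thus ?thesis using c0 by (simp add: field_simps)
    qed
    finally show ?thesis unfolding s_def .
  qed
  define M where "M = M0 + \<eta>"
  have Mpos: "M > 0" using M0 eta by (simp add: M_def)
  define sg where "sg b = (if b then M else - M)" for b :: bool
  have sga: "\<bar>sg b\<bar> = M" for b using Mpos by (simp add: sg_def)
  define pt where "pt ib = sg (snd ib) *\<^sub>R (\<Sum>e\<in>E. A e (fst ib) *\<^sub>R e)" for ib :: "nat \<times> bool"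
  define I where "I = {..<N} \<times> (UNIV :: bool set)"
  define P where "P = pt ` I"
  define K where "K = convex hull P"
  define t where "t = (\<Sum>e\<in>E. inner e g *\<^sub>R e)"
  have finI: "finite I" unfolding I_def by simp
  have finP: "finite P" unfolding P_def using finI by simp
  have ptS: "pt ib \<in> S" for ib unfolding pt_def using ES sub by (intro subspace_scale subspace_sum) auto
  have tS: "t \<in> S" unfolding t_def using ES sub by (intro subspace_sum subspace_scale) auto
  have KS: "K \<subseteq> S" unfolding K_def P_def
    by (rule hull_minimal) (use ptS subspace_imp_convex[OF sub] in auto)
  have inner_pt: "inner z (pt ib) = sg (snd ib) * A z (fst ib)" if z: "z \<in> S" for z ib
  proof -
    have "inner z (pt ib) = sg (snd ib) * (\<Sum>e\<in>E. inner e z * A e (fst ib))"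
      unfolding pt_def by (simp add: inner_sum_right inner_commute mult.commute)
    thus ?thesis using Arep[OF z] by simp
  qed
  have inner_t: "inner z t = inner z g" if z: "z \<in> S" for z
  proof -
    have "inner z t = (\<Sum>e\<in>E. inner e g * inner e z)"
      unfolding t_def by (simp add: inner_sum_right inner_commute)
    also have "\<dots> = inner (\<Sum>e\<in>E. inner e z *\<^sub>R e) g"
      by (simp add: inner_sum_left mult.commute)
    also have "\<dots> = inner z g" using rep z by metis
    finally show ?thesis .
  qed
  have tK: "t \<in> K"
  proof (rule ccontr)
    assume tK: "t \<notin> K"
    have cK: "compact K" unfolding K_def by (rule finite_imp_compact_convex_hull[OF finP])
    have "(0, True) \<in> I" unfolding I_def N_def by simp
    hence "P \<noteq> {}" unfolding P_def by blast
    hence neK: "K \<noteq> {}" unfolding K_def using hull_subset[of P convex] by blast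
    have "continuous_on K (\<lambda>x. norm (t - x))" by (intro continuous_intros)
    then obtain p where pK: "p \<in> K" and pmin: "\<forall>x\<in>K. norm (t - p) \<le> norm (t - x)"
      using continuous_attains_inf[OF cK neK] by blast
    define c0' where "c0' = t - p"
    have cne: "c0' \<noteq> 0" using tK pK by (auto simp: c0'_def)
    have cS: "c0' \<in> S" unfolding c0'_def using tS KS pK subspace_diff[OF sub] by blast
    define s where "s = supnorm (A c0')"
    have Ane: "A c0' \<noteq> (\<lambda>_. 0)" using inj[OF cS] cne by blast
    have "s \<noteq> 0" unfolding s_def using supnorm_zero_iff[OF bdd, of c0'] Ane by simp
    hence spos: "s > 0" using supnorm_nn[of c0'] s_def by linarith
    have key: "M * \<bar>A c0' i\<bar> < inner c0' g" if i: "i < N" for i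
    proof -
      have lt: "sg b * A c0' i < inner c0' g" for b
      proof -
        have "(i, b) \<in> I" using i unfolding I_def by simp
        hence "pt (i, b) \<in> K" unfolding K_def P_def using hull_subset[of "pt ` I" convex] by blast
        hence "inner c0' (pt (i, b) - p) \<le> 0" unfolding c0'_def
          by (rule closest_var[OF convex_convex_hull[of P, folded K_def] pK pmin])
        hence "inner c0' (pt (i, b)) \<le> inner c0' p" by (simp add: inner_diff_right)
        also have "inner c0' p = inner c0' t - inner c0' c0'" by (simp add: c0'_def inner_diff_right)
        also have "\<dots> < inner c0' t" using cne by simp
        finally show ?thesis using inner_pt[OF cS, of "(i, b)"] inner_t[OF cS] by simp
      qed
      show ?thesis
      proof (cases "A c0' i \<ge> 0")
        case True thus ?thesis using lt[of True] by (simp add: sg_def)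
      next
        case False thus ?thesis using lt[of False] by (simp add: sg_def)
      qed
    qed
    define q where "q = inner c0' g / M"
    have "\<bar>A c0' i\<bar> \<le> max q (s / 2)" for i
    proof (cases "i < N")
      case True
      hence "M * \<bar>A c0' i\<bar> < inner c0' g" by (rule key)
      hence "\<bar>A c0' i\<bar> \<le> q" using Mpos by (simp add: q_def field_simps)
      thus ?thesis by simp
    next
      case False
      hence "\<bar>A c0' i\<bar> \<le> s / 2" using tail[OF cS] s_def by simp
      thus ?thesis by simp
    qed
    hence "s \<le> max q (s / 2)" unfolding s_def by (rule supnorm_le)
    hence "s \<le> q" using spos by (simp add: max_def split: if_splits)
    hence "M * s \<le> inner c0' g" using Mpos by (simp add: q_def field_simps)
    also have "\<dots> \<le> M0 * s" using hyp[OF cS] s_def by simp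
    finally have "\<eta> * s \<le> 0" by (simp add: M_def algebra_simps)
    thus False using eta spos by (simp add: mult_le_0_iff)
  qed
  then obtain u where u0: "\<forall>x\<in>P. 0 \<le> u x" and u1: "sum u P = 1" and ut: "(\<Sum>x\<in>P. u x *\<^sub>R x) = t"
    unfolding K_def convex_hull_finite[OF finP] by blast
  define idx where "idx x = inv_into I pt x" for x
  have idxI: "idx x \<in> I" if "x \<in> P" for x using that unfolding idx_def P_def by (rule inv_into_into)
  have ptidx: "pt (idx x) = x" if "x \<in> P" for x using that unfolding idx_def P_def by (rule f_inv_into_f)
  define W where "W ib j = (if j = fst ib then sg (snd ib) else 0)" for ib :: "nat \<times> bool" and j :: nat
  define w where "w j = (\<Sum>x\<in>P. u x * W (idx x) j)" for j
  have wz: "w j = 0" if "j \<ge> N" for j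
  proof -
    have "W (idx x) j = 0" if "x \<in> P" for x
      using idxI[OF that] \<open>j \<ge> N\<close> unfolding W_def I_def by auto
    thus ?thesis unfolding w_def by simp
  qed
  note wf = fin_ell1[of N w, OF wz]
  have Wsum: "(\<Sum>j<N. \<bar>W ib j\<bar>) = M" if "ib \<in> I" for ib
  proof -
    have "(\<Sum>j<N. \<bar>W ib j\<bar>) = (\<Sum>j<N. if j = fst ib then \<bar>sg (snd ib)\<bar> else 0)"
      unfolding W_def by (intro sum.cong) auto
    also have "\<dots> = \<bar>sg (snd ib)\<bar>" using that unfolding I_def by auto
    finally show ?thesis using sga by simp
  qed
  have "l1norm w = (\<Sum>j<N. \<bar>w j\<bar>)" by (rule wf(2))
  also have "\<dots> \<le> (\<Sum>j<N. \<Sum>x\<in>P. u x * \<bar>W (idx x) j\<bar>)"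
  proof (rule sum_mono)
    fix j
    have "\<bar>w j\<bar> \<le> (\<Sum>x\<in>P. \<bar>u x * W (idx x) j\<bar>)" unfolding w_def by (rule sum_abs)
    also have "\<dots> = (\<Sum>x\<in>P. u x * \<bar>W (idx x) j\<bar>)" using u0 by (intro sum.cong) (auto simp: abs_mult)
    finally show "\<bar>w j\<bar> \<le> (\<Sum>x\<in>P. u x * \<bar>W (idx x) j\<bar>)" .
  qed
  also have "\<dots> = (\<Sum>x\<in>P. u x * (\<Sum>j<N. \<bar>W (idx x) j\<bar>))"
    by (subst sum.swap) (simp add: sum_distrib_left)
  also have "\<dots> = (\<Sum>x\<in>P. u x * M)" using Wsum idxI by (intro sum.cong) auto
  also have "\<dots> = M" using u1 by (simp add: sum_distrib_right[symmetric])
  finally have wn: "l1norm w \<le> M0 + \<eta>" by (simp add: M_def)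
  have wp: "(\<Sum>i. w i * A z i) = inner z g" if z: "z \<in> S" for z
  proof -
    have "(\<Sum>i. w i * A z i) = (\<Sum>j<N. w j * A z j)" by (rule wf(3))
    also have "\<dots> = (\<Sum>x\<in>P. u x * (\<Sum>j<N. W (idx x) j * A z j))"
      unfolding w_def by (simp add: sum_distrib_right sum_distrib_left mult.assoc) (rule sum.swap)
    also have "\<dots> = (\<Sum>x\<in>P. u x * inner z x)"
    proof (intro sum.cong refl)
      fix x assume x: "x \<in> P"
      have "(\<Sum>j<N. W (idx x) j * A z j) = (\<Sum>j<N. if j = fst (idx x) then sg (snd (idx x)) * A z j else 0)"
        unfolding W_def by (intro sum.cong) auto
      also have "\<dots> = sg (snd (idx x)) * A z (fst (idx x))" using idxI[OF x] unfolding I_def by auto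
      also have "\<dots> = inner z (pt (idx x))" using inner_pt[OF z] by simp
      also have "\<dots> = inner z x" using ptidx[OF x] by simp
      finally show "u x * (\<Sum>j<N. W (idx x) j * A z j) = u x * inner z x" by simp
    qed
    also have "\<dots> = inner z t" unfolding ut[symmetric] by (simp add: inner_sum_right)
    also have "\<dots> = inner z g" by (rule inner_t[OF z])
    finally show ?thesis .
  qed
  show ?thesis using wf(1) wn wp by blast
qed


lemma kappa_le:
  fixes A :: "'h::real_inner \<Rightarrow> nat \<Rightarrow> real"
  assumes bl: "bounded_linear_c0 A" and c: "\<forall>z\<in>S. norm z \<le> c * supnorm (A z)"
    and inj: "\<And>z. z \<in> S \<Longrightarrow> A z = (\<lambda>_. 0) \<Longrightarrow> z = 0" and z: "z \<in> S"
  shows "norm z \<le> kappa A S * supnorm (A z)"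
proof -
  interpret opA A by (rule opA.intro[OF bl])
  show ?thesis
proof (cases "z = 0")
  case True thus ?thesis by (simp add: zero supnorm_def)
next
  case False
  have pos: "supnorm (A y) > 0" if "y \<in> S" "y \<noteq> 0" for y
  proof -
    have "A y \<noteq> (\<lambda>_. 0)" using inj that by blast
    hence "supnorm (A y) \<noteq> 0" using supnorm_zero_iff[OF bdd] by blast
    thus ?thesis using supnorm_nn[of y] by linarith
  qed
  have "bdd_above ((\<lambda>y. norm y / supnorm (A y)) ` (S - {0}))"
  proof (rule bdd_aboveI2)
    fix y assume "y \<in> S - {0}"
    thus "norm y / supnorm (A y) \<le> c" using c pos[of y] by (simp add: divide_le_eq)
  qed
  hence "norm z / supnorm (A z) \<le> kappa A S"
    unfolding kappa_def using z False by (intro cSUP_upper) auto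
  thus ?thesis using pos[OF z False] by (simp add: divide_le_eq)
qed
qed

lemma part_a:
  fixes A :: "'h::{real_inner,complete_space} \<Rightarrow> nat \<Rightarrow> real"
  assumes bl: "bounded_linear_c0 A"
    and Hs_sub: "\<And>n. subspace (Hs n)"
    and solvable: "\<exists>u\<in>ell1. adj A u = f"
    and approx: "\<And>z. (\<lambda>n. INF zn\<in>Hs n. supnorm (A (z - zn))) \<longlonglongrightarrow> 0"
    and sol: "\<forall>n. min_l1_sol A (Hs n) f (useq n)"
  shows "\<exists>r u. strict_mono r \<and> u \<in> ell1 \<and> adj A u = f \<and>
               (\<lambda>k. l1norm (\<lambda>i. useq (r k) i - u i)) \<longlonglongrightarrow> 0"
proof -
  interpret opA A by (rule opA.intro[OF bl])
  obtain u0 where u0: "u0 \<in> ell1" "adj A u0 = f" using solvable by blast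
  have U1: "useq n \<in> ell1" for n using sol unfolding min_l1_sol_def by blast
  have feas: "\<And>z. z \<in> Hs n \<Longrightarrow> inner z (adj A (useq n)) = inner z f" for n
    using sol unfolding min_l1_sol_def by blast
  have opt0: "l1norm (useq n) \<le> l1norm v" if "v \<in> ell1" "adj A v = f" for n v
    using sol that unfolding min_l1_sol_def by blast
  show ?thesis
  proof (rule conclude[OF bl])
    show "useq n \<in> ell1 \<and> l1norm (useq n) \<le> l1norm u0" for n using U1 opt0 u0 by blast
    show "\<exists>K. \<forall>n\<ge>K. l1norm (useq n) \<le> l1norm v + e" if "v \<in> ell1" "adj A v = f" "e > 0" for v e
    proof (intro exI[of _ 0] allI impI)
      fix n show "l1norm (useq n) \<le> l1norm v + e" using opt0[OF that(1,2), of n] that(3) by linarith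
    qed
    fix z
    show "(\<lambda>n. \<Sum>i. useq n i * A z i) \<longlonglongrightarrow> inner z f"
    proof (rule key_conv[OF bl _ u0, where S = Hs and E = "\<lambda>_. 0"])
      show "useq n \<in> ell1 \<and> l1norm (useq n) \<le> l1norm u0" for n using U1 opt0 u0 by blast
      show "Hs n \<noteq> {}" for n using subspace_0[OF Hs_sub[of n]] by blast
      show "(\<lambda>n. INF zn\<in>Hs n. supnorm (A (z - zn))) \<longlonglongrightarrow> 0" by (rule approx)
      show "(\<lambda>_. 0::real) \<longlonglongrightarrow> 0" by simp
      show "0 \<le> (0::real)" by simp
      fix n zn assume zn: "zn \<in> Hs n"
      have "(\<Sum>i. useq n i * A zn i) = inner zn f"
        using adj_char[OF bl U1[of n], of zn] feas[OF zn] by (simp add: inner_commute)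
      thus "\<bar>(\<Sum>i. useq n i * A zn i) - inner zn f\<bar> \<le> 0 * supnorm (A zn)" by simp
    qed
  qed
qed

lemma part_b:
  fixes A :: "'h::{real_inner,complete_space} \<Rightarrow> nat \<Rightarrow> real"
    and Hs :: "nat \<Rightarrow> 'h set" and f :: 'h
    and nAP :: "real \<Rightarrow> nat" and \<delta> :: "nat \<Rightarrow> real" and fd :: "nat \<Rightarrow> 'h" and um :: "nat \<Rightarrow> nat \<Rightarrow> real"
  assumes bl: "bounded_linear_c0 A"
    and Hs_sub: "\<And>n. subspace (Hs n)"
    and Hs_dim: "\<And>n. dim (Hs n) = n"
    and null_trivial: "\<And>n z. z \<in> Hs n \<Longrightarrow> A z = (\<lambda>_. 0) \<Longrightarrow> z = 0"
    and solvable: "\<exists>u\<in>ell1. adj A u = f"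
    and approx: "\<And>z. (\<lambda>n. INF zn\<in>Hs n. supnorm (A (z - zn))) \<longlonglongrightarrow> 0"
    and nlim: "filterlim nAP at_top (at_right 0)"
    and klim: "((\<lambda>d. d * kappa A (Hs (nAP d))) \<longlongrightarrow> 0) (at_right 0)"
    and dpos: "\<forall>m. \<delta> m > 0" and dlim: "\<delta> \<longlonglongrightarrow> 0"
    and fdb: "\<forall>m. norm (fd m - f) \<le> \<delta> m"
    and sol: "\<forall>m. min_l1_sol A (Hs (nAP (\<delta> m))) (fd m) (um m)"
  shows "\<exists>r u. strict_mono r \<and> u \<in> ell1 \<and> adj A u = f \<and>
               (\<lambda>l. l1norm (\<lambda>i. um (r l) i - u i)) \<longlonglongrightarrow> 0"
proof -
  interpret opA A by (rule opA.intro[OF bl])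
  obtain u0 where u0: "u0 \<in> ell1" "adj A u0 = f" using solvable by blast
  have dR: "filterlim \<delta> (at_right 0) sequentially"
    by (rule tendsto_imp_filterlim_at_right[OF dlim]) (use dpos in auto)
  have nT: "filterlim (\<lambda>m. nAP (\<delta> m)) at_top sequentially"
    by (rule filterlim_compose[OF nlim dR])
  have kl: "(\<lambda>m. \<delta> m * kappa A (Hs (nAP (\<delta> m)))) \<longlonglongrightarrow> 0"
    using filterlim_compose[OF klim dR] by simp
  have apl: "(\<lambda>m. INF zn\<in>Hs (nAP (\<delta> m)). supnorm (A (z - zn))) \<longlonglongrightarrow> 0" for z
    using filterlim_compose[OF approx[of z] nT] by simp
  obtain K0 where K0: "\<And>m. m \<ge> K0 \<Longrightarrow> nAP (\<delta> m) \<ge> 1"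
    using nT unfolding filterlim_at_top eventually_sequentially by blast
  define D where "D m = \<delta> (m + K0)" for m
  define N where "N m = nAP (\<delta> (m + K0))" for m
  define UM where "UM m = um (m + K0)" for m
  define F where "F m = fd (m + K0)" for m
  define \<kappa> where "\<kappa> m = kappa A (Hs (N m))" for m
  have N1: "N m \<ge> 1" for m unfolding N_def by (rule K0) simp
  have D0: "D m > 0" for m using dpos D_def by simp
  have Fb: "norm (F m - f) \<le> D m" for m using fdb F_def D_def by simp
  have solm: "min_l1_sol A (Hs (N m)) (F m) (UM m)" for m using sol N_def F_def UM_def by simp
  have kl': "(\<lambda>m. D m * \<kappa> m) \<longlonglongrightarrow> 0"
    using LIMSEQ_ignore_initial_segment[OF kl, of K0] unfolding D_def \<kappa>_def N_def by simp
  have apl': "(\<lambda>m. INF zn\<in>Hs (N m). supnorm (A (z - zn))) \<longlonglongrightarrow> 0" for z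
    using LIMSEQ_ignore_initial_segment[OF apl[of z], of K0] unfolding N_def by simp
  have "\<forall>m. \<exists>E. onb E (Hs (N m))" using fd_onb[OF Hs_sub Hs_dim N1] by blast
  then obtain E where E: "\<And>m. onb (E m) (Hs (N m))" by metis
  have nt: "z \<in> Hs (N m) \<Longrightarrow> A z = (\<lambda>_. 0) \<Longrightarrow> z = 0" for m z using null_trivial by blast
  have kap: "norm z \<le> \<kappa> m * supnorm (A z)" if "z \<in> Hs (N m)" for z m
  proof -
    have "\<exists>c\<ge>0. \<forall>z\<in>Hs (N m). norm z \<le> c * supnorm (A z)"
      by (rule fd_equiv[OF bl E[of m]]) (rule nt)
    then obtain c where "c \<ge> 0" "\<forall>z\<in>Hs (N m). norm z \<le> c * supnorm (A z)" by blast
    thus ?thesis unfolding \<kappa>_def by (intro kappa_le[OF bl _ _ that]) (auto intro: nt)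
  qed
  have err: "\<bar>inner z (F m - f)\<bar> \<le> \<bar>D m * \<kappa> m\<bar> * supnorm (A z)" if "z \<in> Hs (N m)" for z m
  proof -
    have "\<bar>inner z (F m - f)\<bar> \<le> norm z * norm (F m - f)" by (rule Cauchy_Schwarz_ineq2)
    also have "\<dots> \<le> norm z * D m" by (rule mult_left_mono[OF Fb]) simp
    also have "\<dots> \<le> (\<kappa> m * supnorm (A z)) * D m" by (rule mult_right_mono[OF kap[OF that]]) (use D0 less_imp_le in blast)
    also have "\<dots> = (D m * \<kappa> m) * supnorm (A z)" by simp
    also have "\<dots> \<le> \<bar>D m * \<kappa> m\<bar> * supnorm (A z)" by (rule mult_right_mono[OF abs_ge_self supnorm_nn])
    finally show ?thesis .
  qed
  define \<epsilon> where "\<epsilon> m = \<bar>D m * \<kappa> m\<bar> + 1 / Suc m" for m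
  have el: "\<epsilon> \<longlonglongrightarrow> 0"
    using tendsto_add[OF tendsto_rabs_zero[OF kl'] LIMSEQ_Suc[OF lim_1_over_n]] unfolding \<epsilon>_def by simp
  have UM1: "UM m \<in> ell1" for m using solm unfolding min_l1_sol_def by blast
  have bnd: "l1norm (UM m) \<le> l1norm v + \<epsilon> m" if v: "v \<in> ell1" "adj A v = f" for v m
  proof -
    have "\<exists>w\<in>ell1. l1norm w \<le> \<bar>D m * \<kappa> m\<bar> + 1 / Suc m \<and> (\<forall>z\<in>Hs (N m). (\<Sum>i. w i * A z i) = inner z (F m - f))"
      by (rule hb[OF bl E[of m] _ abs_ge_zero]) (auto intro: nt err)
    then obtain w where w: "w \<in> ell1" "l1norm w \<le> \<bar>D m * \<kappa> m\<bar> + 1 / Suc m"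
      "\<forall>z\<in>Hs (N m). (\<Sum>i. w i * A z i) = inner z (F m - f)" by blast
    define w' where "w' = (\<lambda>i. v i + w i)"
    have w': "w' \<in> ell1" using ell1_add[OF v(1) w(1)] unfolding w'_def .
    have "inner z (adj A w') = inner z (F m)" if z: "z \<in> Hs (N m)" for z
    proof -
      have "inner (adj A w') z = (\<Sum>i. v i * A z i + w i * A z i)"
        using adj_char[OF bl w', of z] by (simp add: w'_def distrib_right)
      also have "\<dots> = (\<Sum>i. v i * A z i) + (\<Sum>i. w i * A z i)"
        by (rule suminf_add[OF pairA(1)[OF v(1)] pairA(1)[OF w(1)], symmetric])
      also have "(\<Sum>i. v i * A z i) = inner f z" using adj_char[OF bl v(1), of z] v(2) by simp
      also have "(\<Sum>i. w i * A z i) = inner z (F m - f)" using w(3) z by blast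
      finally show ?thesis by (simp add: inner_commute inner_diff_right)
    qed
    hence "l1norm (UM m) \<le> l1norm w'" using solm[of m] w' unfolding min_l1_sol_def by blast
    also have "\<dots> \<le> l1norm v + l1norm w" by (rule l1norm_triangle[OF v(1) w(1)]) (simp add: w'_def)
    finally show ?thesis using w(2) unfolding \<epsilon>_def by linarith
  qed
  obtain B where B: "\<And>m. \<epsilon> m \<le> B"
    using convergent_imp_Bseq[OF convergentI[OF el]] BseqE by (metis abs_le_D1 real_norm_def)
  have main: "\<exists>r u. strict_mono r \<and> u \<in> ell1 \<and> adj A u = f \<and>
               (\<lambda>k. l1norm (\<lambda>i. UM (r k) i - u i)) \<longlonglongrightarrow> 0"
  proof (rule conclude[OF bl])
    show U: "UM n \<in> ell1 \<and> l1norm (UM n) \<le> l1norm u0 + B" for n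
      using UM1 bnd[OF u0, of n] B[of n] by force
    show "\<exists>K. \<forall>n\<ge>K. l1norm (UM n) \<le> l1norm v + e" if ve: "v \<in> ell1" "adj A v = f" "e > 0" for v e
    proof -
      obtain K where K: "\<forall>n\<ge>K. \<bar>\<epsilon> n - 0\<bar> < e" using LIMSEQ_D[OF el ve(3)] by auto
      show ?thesis
      proof (intro exI[of _ K] allI impI)
        fix n assume "K \<le> n"
        hence "\<epsilon> n < e" using K by auto
        thus "l1norm (UM n) \<le> l1norm v + e" using bnd[OF ve(1,2), of n] by linarith
      qed
    qed
    fix z
    show "(\<lambda>n. \<Sum>i. UM n i * A z i) \<longlonglongrightarrow> inner z f"
    proof (rule key_conv[OF bl U u0, where S = "\<lambda>m. Hs (N m)" and E = "\<lambda>m. \<bar>D m * \<kappa> m\<bar>"])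
      show "Hs (N n) \<noteq> {}" for n using subspace_0[OF Hs_sub[of "N n"]] by blast
      show "(\<lambda>n. INF zn\<in>Hs (N n). supnorm (A (z - zn))) \<longlonglongrightarrow> 0" by (rule apl')
      show "(\<lambda>m. \<bar>D m * \<kappa> m\<bar>) \<longlonglongrightarrow> 0" by (rule tendsto_rabs_zero[OF kl'])
      show "0 \<le> \<bar>D n * \<kappa> n\<bar>" for n by simp
      fix n zn assume zn: "zn \<in> Hs (N n)"
      have "(\<Sum>i. UM n i * A zn i) = inner zn (F n)"
        using adj_char[OF bl UM1[of n], of zn] solm[of n] zn unfolding min_l1_sol_def
        by (simp add: inner_commute)
      thus "\<bar>(\<Sum>i. UM n i * A zn i) - inner zn f\<bar> \<le> \<bar>D n * \<kappa> n\<bar> * supnorm (A zn)"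
        using err[OF zn] by (simp add: inner_diff_right)
    qed
  qed
  then obtain r u where r: "strict_mono r" "u \<in> ell1" "adj A u = f"
    "(\<lambda>k. l1norm (\<lambda>i. UM (r k) i - u i)) \<longlonglongrightarrow> 0" by blast
  have "strict_mono (\<lambda>k. r k + K0)" using r(1) unfolding strict_mono_def by simp
  thus ?thesis using r(2-4) unfolding UM_def by blast
qed


theorem theorem1:
  fixes A :: "'h::{real_inner,complete_space} \<Rightarrow> nat \<Rightarrow> real"
    and Hs :: "nat \<Rightarrow> 'h set"
    and f :: 'h
  assumes A_bl: "bounded_linear_c0 A"
    and Hs_sub: "\<And>n. subspace (Hs n)"
    and Hs_dim: "\<And>n. dim (Hs n) = n"
    and proj_conv: "\<And>v. (\<lambda>n. orth_proj (Hs n) v) \<longlonglongrightarrow> v"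
    and null_trivial: "\<And>n z. z \<in> Hs n \<Longrightarrow> A z = (\<lambda>_. 0) \<Longrightarrow> z = 0"
    and solvable: "\<exists>u\<in>ell1. adj A u = f"
    and approx: "\<And>z. (\<lambda>n. INF zn\<in>Hs n. supnorm (A (z - zn))) \<longlonglongrightarrow> 0"
  shows
    "(\<forall>useq :: nat \<Rightarrow> nat \<Rightarrow> real.
        (\<forall>n. min_l1_sol A (Hs n) f (useq n)) \<longrightarrow>
        (\<exists>r u. strict_mono r \<and> u \<in> ell1 \<and> adj A u = f \<and>
               (\<lambda>k. l1norm (\<lambda>i. useq (r k) i - u i)) \<longlonglongrightarrow> 0))
     \<and>
     (\<forall>(nAP :: real \<Rightarrow> nat) (\<delta> :: nat \<Rightarrow> real) (fd :: nat \<Rightarrow> 'h) (um :: nat \<Rightarrow> nat \<Rightarrow> real).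
        filterlim nAP at_top (at_right 0) \<longrightarrow>
        ((\<lambda>d. d * kappa A (Hs (nAP d))) \<longlongrightarrow> 0) (at_right 0) \<longrightarrow>
        (\<forall>m. \<delta> m > 0) \<longrightarrow> \<delta> \<longlonglongrightarrow> 0 \<longrightarrow>
        (\<forall>m. norm (fd m - f) \<le> \<delta> m) \<longrightarrow>
        (\<forall>m. min_l1_sol A (Hs (nAP (\<delta> m))) (fd m) (um m)) \<longrightarrow>
        (\<exists>r u. strict_mono r \<and> u \<in> ell1 \<and> adj A u = f \<and>
               (\<lambda>l. l1norm (\<lambda>i. um (r l) i - u i)) \<longlonglongrightarrow> 0))"
proof (intro conjI allI impI)
  fix useq :: "nat \<Rightarrow> nat \<Rightarrow> real"
  assume "\<forall>n. min_l1_sol A (Hs n) f (useq n)"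
  thus "\<exists>r u. strict_mono r \<and> u \<in> ell1 \<and> adj A u = f \<and>
               (\<lambda>k. l1norm (\<lambda>i. useq (r k) i - u i)) \<longlonglongrightarrow> 0"
    by (rule part_a[OF A_bl Hs_sub solvable approx])
next
  fix nAP :: "real \<Rightarrow> nat" and \<delta> :: "nat \<Rightarrow> real" and fd :: "nat \<Rightarrow> 'h" and um :: "nat \<Rightarrow> nat \<Rightarrow> real"
  assume h1: "filterlim nAP at_top (at_right 0)"
    and h2: "((\<lambda>d. d * kappa A (Hs (nAP d))) \<longlongrightarrow> 0) (at_right 0)"
    and h3: "\<forall>m. \<delta> m > 0" and h4: "\<delta> \<longlonglongrightarrow> 0"
    and h5: "\<forall>m. norm (fd m - f) \<le> \<delta> m"
    and h6: "\<forall>m. min_l1_sol A (Hs (nAP (\<delta> m))) (fd m) (um m)"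
  show "\<exists>r u. strict_mono r \<and> u \<in> ell1 \<and> adj A u = f \<and>
               (\<lambda>l. l1norm (\<lambda>i. um (r l) i - u i)) \<longlonglongrightarrow> 0"
    by (rule part_b[OF A_bl Hs_sub Hs_dim null_trivial solvable approx h1 h2 h3 h4 h5 h6])
qed

end
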